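(* Let $\sigma>0$ and let $\vec\alpha=(\alpha_n)_{n\ge0}$, $\vec\beta=(\beta_n)_{n\ge0}$ be sequences of non-negative reals, neither identically zero, such that $$\sum_{n=0}^\infty n\alpha_n<\infty\quad\text{and}\quad \sum_{n=0}^\infty n\beta_n<\infty.$$ For each $L\ge1$ let $(\gamma^{(L)}_0,\dots,\gamma^{(L)}_L)$ be a random Motzkin path of length $L$ sampled from $\Pr_L$ (defined in the context), and define the processes $\{\gamma^{(L)}_k\}_{k\ge0}$ and $\{\widetilde\gamma^{(L)}_k\}_{k\ge0}$ by $\gamma^{(L)}_k:=0$ for $k>L$, and $\widetilde\gamma^{(L)}_k:=\gamma^{(L)}_{L-k}$ for $0\le k\le L$, $\widetilde\gamma^{(L)}_k:=0$ for $k>L$. Then, as $L\to\infty$, $$\Big(\{\gamma^{(L)}_k\}_{k\ge0},\{\widetilde\gamma^{(L)}_k\}_{k\ge0}\Big)\Rightarrow\Big(\{X_k\}_{k\ge0},\{X'_k\}_{k\ge0}\Big)$$ in the sense of convergence of finite-dimensional distributions, where $\{X_k\}$ and $\{X'_k\}$ are two independent Markov chains on $\mathbb Z_{\ge0}$ with the same transition probabilities $$\mathsf P_{n,m}=\begin{cases}\frac{1}{2+\sigma}\frac{n+2}{n+1}, & m=n+1,\\ \frac{\sigma}{2+\sigma}, & m=n,\\ \frac{1}{2+\sigma}\frac{n}{n+1}, & m=n-1\ge0,\\ 0, &\text{otherwise},\end{cases}\qquad n\ge0,$$ and initial laws $$\Pr(X_0=n)=\frac{(n+1)\alpha_n}{C_{\vec\alpha}},\qquad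 \Pr(X'_0=n)=\frac{(n+1)\beta_n}{C_{\vec\beta}},\quad n\ge0,$$ with $C_{\vec\alpha}=\sum_{m\ge0}(m+1)\alpha_m$ and $C_{\vec\beta}=\sum_{m\ge0}(m+1)\beta_m$.
   Context: A Motzkin path of length $L\in\mathbb Z_{\ge1}$ is a sequence $\vec\gamma=(\gamma_0,\gamma_1,\dots,\gamma_L)$ of non-negative integers with $|\gamma_k-\gamma_{k-1}|\le1$ for $k=1,\dots,L$; $\mathcal M^{(L)}$ denotes the set of all such paths (with arbitrary end points). Given $\sigma>0$, the weight of a path is $w(\vec\gamma)=\sigma^{\#\{k\in\{1,\dots,L\}:\ \gamma_k=\gamma_{k-1}\}}$ (up steps and down steps have weight $1$, horizontal steps weight $\sigma$). Given non-negative sequences $\vec\alpha,\vec\beta$, set $\mathfrak C_{\vec\alpha,\vec\beta,L}=\sum_{\vec\gamma\in\mathcal M^{(L)}}\alpha_{\gamma_0}\beta_{\gamma_L}w(\vec\gamma)$; when this is finite and positive, $\Pr_L(\vec\gamma)=\alpha_{\gamma_0}\beta_{\gamma_L}w(\vec\gamma)/\mathfrak C_{\vec\alpha,\vec\beta,L}$ is a probability measure on $\mathcal M^{(L)}$. *)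

theory Defs
  imports "HOL-Analysis.Analysis"
begin

definition motzkin_paths :: "nat \<Rightarrow> nat list set" where
  "motzkin_paths L = {g. length g = Suc L \<and>
      (\<forall>k<L. \<bar>int (g ! Suc k) - int (g ! k)\<bar> \<le> 1)}"

definition path_weight :: "real \<Rightarrow> nat \<Rightarrow> nat list \<Rightarrow> real" where
  "path_weight \<sigma> L g = \<sigma> ^ card {k. k < L \<and> g ! Suc k = g ! k}"

definition motzkin_const :: "(nat \<Rightarrow> real) \<Rightarrow> (nat \<Rightarrow> real) \<Rightarrow> real \<Rightarrow> nat \<Rightarrow> real" where
  "motzkin_const \<alpha> \<beta> \<sigma> L =
     infsum (\<lambda>g. \<alpha> (g ! 0) * \<beta> (g ! L) * path_weight \<sigma> L g) (motzkin_paths L)"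

definition motzkin_prob ::
  "(nat \<Rightarrow> real) \<Rightarrow> (nat \<Rightarrow> real) \<Rightarrow> real \<Rightarrow> nat \<Rightarrow> nat list set \<Rightarrow> real" where
  "motzkin_prob \<alpha> \<beta> \<sigma> L E =
     infsum (\<lambda>g. \<alpha> (g ! 0) * \<beta> (g ! L) * path_weight \<sigma> L g) (motzkin_paths L \<inter> E)
     / motzkin_const \<alpha> \<beta> \<sigma> L"

definition gamma_proc :: "nat \<Rightarrow> nat list \<Rightarrow> nat \<Rightarrow> nat" where
  "gamma_proc L g k = (if k \<le> L then g ! k else 0)"

definition gamma_rev_proc :: "nat \<Rightarrow> nat list \<Rightarrow> nat \<Rightarrow> nat" where
  "gamma_rev_proc L g k = (if k \<le> L then g ! (L - k) else 0)"

definition trans_P :: "real \<Rightarrow> nat \<Rightarrow> nat \<Rightarrow> real" where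
  "trans_P \<sigma> n m =
     (if m = Suc n then 1 / (2 + \<sigma>) * (real n + 2) / (real n + 1)
      else if m = n then \<sigma> / (2 + \<sigma>)
      else if Suc m = n then 1 / (2 + \<sigma>) * real n / (real n + 1)
      else 0)"

definition init_law :: "(nat \<Rightarrow> real) \<Rightarrow> nat \<Rightarrow> real" where
  "init_law \<alpha> n = (real n + 1) * \<alpha> n / (\<Sum>m. (real m + 1) * \<alpha> m)"

definition mc_cyl_prob ::
  "(nat \<Rightarrow> real) \<Rightarrow> (nat \<Rightarrow> nat \<Rightarrow> real) \<Rightarrow> nat \<Rightarrow> nat set \<Rightarrow> (nat \<Rightarrow> nat) \<Rightarrow> real" where
  "mc_cyl_prob \<mu> P K I x =
     infsum (\<lambda>z. \<mu> (z ! 0) * (\<Prod>i<K. P (z ! i) (z ! Suc i)))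
       {z. length z = Suc K \<and> (\<forall>k\<in>I. z ! k = x k)}"

end

theory Submission
  imports Defs
begin

lemma cint: "(\<And>x. isCont f x) \<Longrightarrow> (f::real\<Rightarrow>real) integrable_on {a..b}"
  by (intro integrable_continuous_interval continuous_at_imp_continuous_on) auto

fun Wk :: "real \<Rightarrow> nat \<Rightarrow> nat \<Rightarrow> nat \<Rightarrow> real" where
  "Wk \<sigma> 0 a b = (if a = b then 1 else 0)"
| "Wk \<sigma> (Suc M) a b = \<sigma> * Wk \<sigma> M a b + Wk \<sigma> M (Suc a) b + (if a = 0 then 0 else Wk \<sigma> M (a - 1) b)"

definition Jint :: "real \<Rightarrow> nat \<Rightarrow> nat \<Rightarrow> nat \<Rightarrow> real" where
  "Jint \<sigma> M a b = integral {0..pi} (\<lambda>t. (\<sigma> + 2 * cos t) ^ M * sin ((real a + 1) * t) * sin ((real b + 1) * t))"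

lemma sin_sin_integral:
  "integral {0..pi} (\<lambda>t. sin ((real a + 1) * t) * sin ((real b + 1) * t)) = (if a = b then pi / 2 else 0)"
proof -
  define m where "m = real a + 1"
  define n where "n = real b + 1"
  have e: "m + n \<noteq> 0" unfolding m_def n_def by simp
  have sinmn: "sin ((m + n) * pi) = 0"
    using sin_npi[of "a + b + 2"] unfolding m_def n_def by (simp add: algebra_simps)
  have ps: "sin (m * t) * sin (n * t) = (cos ((m - n) * t) - cos ((m + n) * t)) / 2" for t
    by (simp add: cos_diff cos_add algebra_simps left_diff_distrib)
  show ?thesis
  proof (cases "a = b")
    case True
    then have mn: "m - n = 0" by (simp add: m_def n_def)
    define F where "F t = t / 2 - sin ((m + n) * t) / (2 * (m + n))" for t
    have "((\<lambda>t. sin (m * t) * sin (n * t)) has_integral (F pi - F 0)) {0..pi}"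
    proof (rule fundamental_theorem_of_calculus)
      fix x assume "x \<in> {0..pi}"
      have "(F has_real_derivative (1/2 - cos ((m + n) * x) * (m + n) / (2 * (m + n)))) (at x within {0..pi})"
        unfolding F_def using e mn by (auto intro!: derivative_eq_intros)
      moreover have "1/2 - cos ((m + n) * x) * (m + n) / (2 * (m + n)) = sin (m * x) * sin (n * x)"
        using e mn by (subst ps) (simp add: field_simps)
      ultimately show "(F has_vector_derivative sin (m * x) * sin (n * x)) (at x within {0..pi})"
        by (simp add: has_real_derivative_iff_has_vector_derivative)
    qed simp
    moreover have "F pi - F 0 = pi / 2" unfolding F_def using sinmn e by simp
    ultimately show ?thesis using True by (simp add: m_def n_def integral_unique)
  next
    case False
    then have mn: "m - n \<noteq> 0" by (simp add: m_def n_def)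
    have sind: "sin ((m - n) * pi) = 0"
    proof -
      have "(m - n) * pi = pi * of_int (int a - int b)" by (simp add: m_def n_def)
      then show ?thesis by (simp only: sin_npi_int)
    qed
    define F where "F t = sin ((m - n) * t) / (2 * (m - n)) - sin ((m + n) * t) / (2 * (m + n))" for t
    have "((\<lambda>t. sin (m * t) * sin (n * t)) has_integral (F pi - F 0)) {0..pi}"
    proof (rule fundamental_theorem_of_calculus)
      fix x assume "x \<in> {0..pi}"
      have "(F has_real_derivative (cos ((m - n) * x) * (m - n) / (2 * (m - n)) - cos ((m + n) * x) * (m + n) / (2 * (m + n)))) (at x within {0..pi})"
        unfolding F_def using e mn by (auto intro!: derivative_eq_intros)
      moreover have "cos ((m - n) * x) * (m - n) / (2 * (m - n)) - cos ((m + n) * x) * (m + n) / (2 * (m + n)) = sin (m * x) * sin (n * x)"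
      proof -
        have h1: "cos ((m - n) * x) * (m - n) / (2 * (m - n)) = cos ((m - n) * x) / 2" using mn by (simp add: field_simps)
        have h2: "cos ((m + n) * x) * (m + n) / (2 * (m + n)) = cos ((m + n) * x) / 2" using e by (simp add: field_simps)
        show ?thesis by (simp only: h1 h2 ps) (simp add: diff_divide_distrib)
      qed
      ultimately show "(F has_vector_derivative sin (m * x) * sin (n * x)) (at x within {0..pi})"
        by (simp add: has_real_derivative_iff_has_vector_derivative)
    qed simp
    moreover have "F pi - F 0 = 0" unfolding F_def using sinmn sind by simp
    ultimately show ?thesis using False by (simp add: m_def n_def integral_unique)
  qed
qed

lemma two_cos_sin: "2 * cos t * sin ((real a + 1) * t) = sin ((real a + 2) * t) + (if a = 0 then 0 else sin ((real (a - 1) + 1) * t))"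
proof -
  have "sin ((real a + 2) * t) = sin ((real a + 1) * t + t)" by (simp add: algebra_simps)
  moreover have "sin (real a * t) = sin ((real a + 1) * t - t)" by (simp add: algebra_simps)
  ultimately have "sin ((real a + 2) * t) + sin (real a * t) = 2 * cos t * sin ((real a + 1) * t)"
    by (simp add: sin_add sin_diff)
  moreover have "(if a = 0 then 0 else sin ((real (a - 1) + 1) * t)) = sin (real a * t)"
    by (cases a) (auto simp: add.commute)
  ultimately show ?thesis by simp
qed

lemma Wk_Jint: "Wk \<sigma> M a b = 2 / pi * Jint \<sigma> M a b"
proof (induction M arbitrary: a)
  case 0
  then show ?case using sin_sin_integral[of a b] by (simp add: Jint_def)
next
  case (Suc M)
  define g where "g c t = (\<sigma> + 2 * cos t) ^ M * sin ((real c + 1) * t) * sin ((real b + 1) * t)" for c t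
  have gi: "g c integrable_on {0..pi}" for c unfolding g_def by (intro cint) (auto intro!: continuous_intros)
  have J: "Jint \<sigma> M c b = integral {0..pi} (g c)" for c unfolding Jint_def g_def by simp
  have pt: "(\<sigma> + 2 * cos t) ^ Suc M * sin ((real a + 1) * t) * sin ((real b + 1) * t)
      = \<sigma> * g a t + g (Suc a) t + (if a = 0 then 0 else g (a - 1) t)" for t
  proof -
    have "(\<sigma> + 2 * cos t) ^ Suc M * sin ((real a + 1) * t) * sin ((real b + 1) * t)
       = (\<sigma> + 2 * cos t) ^ M * sin ((real b + 1) * t) * (\<sigma> * sin ((real a + 1) * t) + 2 * cos t * sin ((real a + 1) * t))"
      by (simp add: algebra_simps)
    also have "\<dots> = \<sigma> * g a t + g (Suc a) t + (if a = 0 then 0 else g (a - 1) t)"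
      unfolding two_cos_sin g_def by (simp add: algebra_simps add_ac)
    finally show ?thesis .
  qed
  have "Jint \<sigma> (Suc M) a b = integral {0..pi} (\<lambda>t. \<sigma> * g a t + g (Suc a) t + (if a = 0 then 0 else g (a - 1) t))"
    unfolding Jint_def pt ..
  also have "\<dots> = \<sigma> * integral {0..pi} (g a) + integral {0..pi} (g (Suc a)) + (if a = 0 then 0 else integral {0..pi} (g (a - 1)))"
  proof -
    have gi2: "(\<lambda>t. \<sigma> * g c t) integrable_on {0..pi}" for c unfolding g_def by (intro cint) (auto intro!: continuous_intros)
    have gi3: "(\<lambda>t. \<sigma> * g c t + g d t) integrable_on {0..pi}" for c d unfolding g_def by (intro cint) (auto intro!: continuous_intros)
    show ?thesis
      by (cases "a = 0") (simp_all add: integral_add[OF gi3 gi] integral_add[OF gi2 gi])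
  qed
  finally show ?case using Suc.IH by (simp add: J algebra_simps)
qed

lemma Wk_nonneg: "\<sigma> \<ge> 0 \<Longrightarrow> Wk \<sigma> M a b \<ge> 0"
  by (induction M arbitrary: a) auto

lemma Wk00_ge: "\<sigma> \<ge> 0 \<Longrightarrow> Wk \<sigma> M 0 0 \<ge> \<sigma> ^ M"
proof (induction M)
  case (Suc M)
  then have "\<sigma> * \<sigma> ^ M \<le> \<sigma> * Wk \<sigma> M 0 0" by (intro mult_left_mono) auto
  then show ?case using Wk_nonneg[OF Suc.prems, of M 1 0] by simp
qed simp

lemma J00_eq: "Jint \<sigma> M 0 0 = integral {0..pi} (\<lambda>t. (\<sigma> + 2 * cos t) ^ M * (sin t)\<^sup>2)"
  unfolding Jint_def by (simp add: power2_eq_square mult.assoc)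

lemma J00_pos: "\<sigma> > 0 \<Longrightarrow> Jint \<sigma> M 0 0 > 0"
proof -
  assume s: "\<sigma> > 0"
  have "0 < \<sigma> ^ M" using s by simp
  also have "\<dots> \<le> Wk \<sigma> M 0 0" using Wk00_ge s by simp
  finally show ?thesis unfolding Wk_Jint using pi_gt_zero by (simp add: zero_less_mult_iff zero_less_divide_iff)
qed

lemma sin_bound: "\<bar>sin ((real n + 1) * t)\<bar> \<le> (real n + 1) * \<bar>sin t\<bar>"
proof (induction n)
  case (Suc n)
  have "(real (Suc n) + 1) * t = (real n + 1) * t + t" by (simp add: algebra_simps)
  then have "sin ((real (Suc n) + 1) * t) = sin ((real n + 1) * t) * cos t + cos ((real n + 1) * t) * sin t"
    by (simp only: sin_add)
  also have "\<bar>\<dots>\<bar> \<le> \<bar>sin ((real n + 1) * t)\<bar> * \<bar>cos t\<bar> + \<bar>cos ((real n + 1) * t)\<bar> * \<bar>sin t\<bar>"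
    by (simp add: abs_mult[symmetric] abs_triangle_ineq)
  also have "\<dots> \<le> (real n + 1) * \<bar>sin t\<bar> * 1 + 1 * \<bar>sin t\<bar>"
    by (intro add_mono mult_mono Suc.IH) auto
  finally show ?case by (simp add: algebra_simps)
qed simp

definition Tt :: "real \<Rightarrow> nat \<Rightarrow> real \<Rightarrow> real" where
  "Tt \<sigma> M d = integral {d..pi} (\<lambda>t. \<bar>\<sigma> + 2 * cos t\<bar> ^ M * (sin t)\<^sup>2)"

lemma delta0_ex: "\<sigma> > 0 \<Longrightarrow> \<exists>d0. 0 < d0 \<and> d0 \<le> pi / 2 \<and> cos d0 > 1 - \<sigma>"
proof -
  assume s: "\<sigma> > 0"
  have "isCont cos (0::real)" by (rule isCont_cos)
  then have "\<exists>d>0. \<forall>x::real. dist x 0 < d \<longrightarrow> dist (cos x) (cos 0) < \<sigma>"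
    using s unfolding continuous_at_eps_delta by blast
  then obtain d where d: "d > 0" "\<And>x. \<bar>x - 0\<bar> < d \<Longrightarrow> \<bar>cos x - cos 0\<bar> < \<sigma>"
    unfolding dist_real_def by blast
  define d0 where "d0 = min (pi / 2) (d / 2)"
  have "\<bar>cos d0 - 1\<bar> < \<sigma>" using d(2)[of d0] d(1) unfolding d0_def by (auto simp: min_def)
  then show ?thesis using d(1) pi_gt_zero by (intro exI[of _ d0]) (auto simp: d0_def)
qed

lemma fint: "(\<lambda>t. ((\<sigma>::real) + 2 * cos t) ^ M * (sin t)\<^sup>2) integrable_on {a..b}"
  by (intro cint) (auto intro!: continuous_intros)
lemma faint: "(\<lambda>t. \<bar>(\<sigma>::real) + 2 * cos t\<bar> ^ M * (sin t)\<^sup>2) integrable_on {a..b}"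
  by (intro cint) (auto intro!: continuous_intros)

lemma split_int:
  fixes f :: "real \<Rightarrow> real"
  assumes "\<And>x. isCont f x" "a \<le> c" "c \<le> b"
  shows "integral {a..b} f = integral {a..c} f + integral {c..b} f"
  using Henstock_Kurzweil_Integration.integral_combine[OF assms(2,3) cint[OF assms(1)]] by simp

lemma int_abs_bound:
  fixes f g :: "real \<Rightarrow> real"
  assumes "f integrable_on S" "g integrable_on S" "\<And>x. x \<in> S \<Longrightarrow> \<bar>f x\<bar> \<le> g x"
  shows "\<bar>integral S f\<bar> \<le> integral S g"
  using integral_norm_bound_integral[OF assms(1,2)] assms(3) by simp

lemma tail_ge: "integral {d..pi} (\<lambda>t. (\<sigma> + 2 * cos t) ^ M * (sin t)\<^sup>2) \<ge> - Tt \<sigma> M d"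
proof -
  have "integral {d..pi} (\<lambda>t. - (\<bar>\<sigma> + 2 * cos t\<bar> ^ M * (sin t)\<^sup>2)) \<le> integral {d..pi} (\<lambda>t. (\<sigma> + 2 * cos t) ^ M * (sin t)\<^sup>2)"
  proof (rule integral_le)
    show "(\<lambda>t. - (\<bar>\<sigma> + 2 * cos t\<bar> ^ M * (sin t)\<^sup>2)) integrable_on {d..pi}"
      by (intro cint) (auto intro!: continuous_intros)
    fix t
    have "- \<bar>(\<sigma> + 2 * cos t) ^ M\<bar> \<le> (\<sigma> + 2 * cos t) ^ M"
      by (simp split: abs_split)
    then have "- (\<bar>\<sigma> + 2 * cos t\<bar> ^ M) \<le> (\<sigma> + 2 * cos t) ^ M"
      by (simp only: power_abs)
    then have "(- (\<bar>\<sigma> + 2 * cos t\<bar> ^ M)) * (sin t)\<^sup>2 \<le> (\<sigma> + 2 * cos t) ^ M * (sin t)\<^sup>2"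
      by (rule mult_right_mono) simp
    then show "- (\<bar>\<sigma> + 2 * cos t\<bar> ^ M * (sin t)\<^sup>2) \<le> (\<sigma> + 2 * cos t) ^ M * (sin t)\<^sup>2"
      by simp
  qed (rule fint)
  then show ?thesis unfolding Tt_def by simp
qed

lemma Tt_nonneg: "Tt \<sigma> M d \<ge> 0"
  unfolding Tt_def by (rule Henstock_Kurzweil_Integration.integral_nonneg[OF faint]) auto

lemma tail_ratio:
  assumes s: "\<sigma> > 0" and d0: "d0 \<le> pi / 2" "cos d0 > 1 - \<sigma>" and d: "0 < d" "d \<le> d0"
  shows "(\<lambda>M. Tt \<sigma> M d / Jint \<sigma> M 0 0) \<longlonglongrightarrow> 0"
proof -
  define \<tau> where "\<tau> = \<sigma> + 2 * cos (d / 2)"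
  define \<rho> where "\<rho> = max (\<sigma> + 2 * cos d) (2 - \<sigma>)"
  have pi2: "pi / 2 \<le> pi" using pi_gt_zero by linarith
  have cosd: "cos d \<ge> 0" using d d0 by (intro cos_ge_zero) auto
  have c1: "cos d < cos (d / 2)" using d d0 pi2 by (intro cos_monotone_0_pi) auto
  have c2: "cos d0 \<le> cos (d / 2)" using d d0 pi2 by (intro cos_monotone_0_pi_le) auto
  have rho0: "\<rho> \<ge> 0" using cosd s unfolding \<rho>_def by auto
  have rt: "\<rho> < \<tau>" using c1 c2 d0 unfolding \<rho>_def \<tau>_def by auto
  have tau0: "\<tau> > 0" using rho0 rt by linarith
  have absb: "\<bar>\<sigma> + 2 * cos t\<bar> \<le> \<rho>" if "t \<in> {d..pi}" for t
  proof -
    have "cos t \<le> cos d" using that d by (intro cos_monotone_0_pi_le) auto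
    moreover have "cos t \<ge> -1" by (rule cos_ge_minus_one)
    ultimately have "\<sigma> + 2 * cos t \<le> \<sigma> + 2 * cos d" "-(\<sigma> + 2 * cos t) \<le> 2 - \<sigma>" by linarith+
    moreover have "\<sigma> + 2 * cos d \<le> \<rho>" "2 - \<sigma> \<le> \<rho>" unfolding \<rho>_def by auto
    ultimately show ?thesis unfolding abs_le_iff by (intro conjI) linarith+
  qed
  have Tle: "Tt \<sigma> M d \<le> pi * \<rho> ^ M" for M
  proof -
    have "Tt \<sigma> M d \<le> integral {d..pi} (\<lambda>t. \<rho> ^ M)"
      unfolding Tt_def
    proof (rule integral_le[OF faint])
      fix t assume t: "t \<in> {d..pi}"
      have "\<bar>\<sigma> + 2 * cos t\<bar> ^ M \<le> \<rho> ^ M" by (intro power_mono absb t) auto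
      moreover have "(sin t)\<^sup>2 \<le> 1" by (simp add: abs_square_le_1)
      ultimately have "\<bar>\<sigma> + 2 * cos t\<bar> ^ M * (sin t)\<^sup>2 \<le> \<rho> ^ M * 1"
        using rho0 by (intro mult_mono) auto
      then show "\<bar>\<sigma> + 2 * cos t\<bar> ^ M * (sin t)\<^sup>2 \<le> \<rho> ^ M" by simp
    qed (rule cint, simp)
    also have "\<dots> = (pi - d) * \<rho> ^ M" using d d0 pi2 by simp
    also have "\<dots> \<le> pi * \<rho> ^ M" using d rho0 by (intro mult_right_mono) auto
    finally show ?thesis .
  qed
  define \<kappa> where "\<kappa> = d / 4 * (sin (d / 4))\<^sup>2"
  have sd4: "sin (d / 4) > 0" using d d0 pi2 by (intro sin_gt_zero) auto
  have kappa0: "\<kappa> > 0" unfolding \<kappa>_def using d sd4 by auto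
  have Jge: "Jint \<sigma> M 0 0 \<ge> \<kappa> * \<tau> ^ M - Tt \<sigma> M d" for M
  proof -
    let ?f = "\<lambda>t. (\<sigma> + 2 * cos t) ^ M * (sin t)\<^sup>2"
    have cf: "isCont ?f x" for x by (auto intro!: continuous_intros)
    have fnn: "?f t \<ge> 0" if "t \<in> {0..d}" for t
    proof -
      have "cos t \<ge> 0" using that d d0 by (intro cos_ge_zero) auto
      then show ?thesis using s by auto
    qed
    have J: "Jint \<sigma> M 0 0 = integral {0..d/4} ?f + integral {d/4..d/2} ?f + integral {d/2..d} ?f + integral {d..pi} ?f"
      unfolding J00_eq using d d0 pi2
      by (simp add: split_int[OF cf, of 0 d pi] split_int[OF cf, of 0 "d/2" d] split_int[OF cf, of 0 "d/4" "d/2"])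
    have i1: "integral {0..d/4} ?f \<ge> 0" by (rule Henstock_Kurzweil_Integration.integral_nonneg[OF fint]) (use d fnn in auto)
    have i3: "integral {d/2..d} ?f \<ge> 0" by (rule Henstock_Kurzweil_Integration.integral_nonneg[OF fint]) (use d fnn in auto)
    have i2: "integral {d/4..d/2} ?f \<ge> \<kappa> * \<tau> ^ M"
    proof -
      have "integral {d/4..d/2} (\<lambda>t. \<tau> ^ M * (sin (d / 4))\<^sup>2) \<le> integral {d/4..d/2} ?f"
      proof (rule integral_le[OF _ fint])
        fix t assume t: "t \<in> {d/4..d/2}"
        have "cos (d/2) \<le> cos t" using t d d0 pi2 by (intro cos_monotone_0_pi_le) auto
        then have "\<tau> \<le> \<sigma> + 2 * cos t" unfolding \<tau>_def by simp
        then have q0: "0 \<le> \<sigma> + 2 * cos t" using tau0 by linarith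
        from \<open>\<tau> \<le> \<sigma> + 2 * cos t\<close> have a: "\<tau> ^ M \<le> (\<sigma> + 2 * cos t) ^ M" using tau0 by (intro power_mono) auto
        have "sin (d/4) \<le> sin t" using t d d0 pi2 by (intro sin_monotone_2pi_le) auto
        then have b: "(sin (d / 4))\<^sup>2 \<le> (sin t)\<^sup>2" using sd4 by (intro power_mono) auto
        show "\<tau> ^ M * (sin (d / 4))\<^sup>2 \<le> ?f t" using a b tau0 q0 by (intro mult_mono) auto
      qed (rule cint, simp)
      then show ?thesis using d unfolding \<kappa>_def by (simp add: algebra_simps)
    qed
    have i4: "integral {d..pi} ?f \<ge> - Tt \<sigma> M d" by (rule tail_ge)
    show ?thesis using J i1 i2 i3 i4 by linarith
  qed
  define r where "r = \<rho> / \<tau>"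
  have r0: "0 \<le> r" "r < 1" unfolding r_def using rho0 rt tau0 by auto
  have rlim: "(\<lambda>M. 2 * pi / \<kappa> * r ^ M) \<longlonglongrightarrow> 0"
    using LIMSEQ_power_zero[of r] r0 by (intro tendsto_mult_right_zero) auto
  have lim0: "(\<lambda>M. pi * r ^ M) \<longlonglongrightarrow> 0"
    using LIMSEQ_power_zero[of r] r0 by (intro tendsto_mult_right_zero) auto
  have ev: "eventually (\<lambda>M. pi * r ^ M < \<kappa> / 2) sequentially"
    using order_tendstoD(2)[OF lim0, of "\<kappa> / 2"] kappa0 by auto
  show ?thesis
  proof (rule tendsto_sandwich[OF _ _ tendsto_const rlim])
    show "eventually (\<lambda>M. 0 \<le> Tt \<sigma> M d / Jint \<sigma> M 0 0) sequentially"
      using J00_pos[OF s] Tt_nonneg by (intro always_eventually) (auto intro: divide_nonneg_pos)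
    show "eventually (\<lambda>M. Tt \<sigma> M d / Jint \<sigma> M 0 0 \<le> 2 * pi / \<kappa> * r ^ M) sequentially"
      using ev
    proof eventually_elim
      case (elim M)
      have rt': "\<rho> ^ M = r ^ M * \<tau> ^ M" unfolding r_def using tau0 by (simp add: power_divide)
      have T1: "Tt \<sigma> M d \<le> pi * r ^ M * \<tau> ^ M" using Tle[of M] rt' by simp
      have T2: "pi * r ^ M * \<tau> ^ M \<le> \<kappa> / 2 * \<tau> ^ M" using elim tau0 by (intro mult_right_mono) auto
      have Jpos: "Jint \<sigma> M 0 0 \<ge> \<kappa> / 2 * \<tau> ^ M" using Jge[of M] T1 T2 by linarith
      have kt: "\<kappa> / 2 * \<tau> ^ M > 0" using kappa0 tau0 by simp
      have "Tt \<sigma> M d / Jint \<sigma> M 0 0 \<le> (pi * r ^ M * \<tau> ^ M) / (\<kappa> / 2 * \<tau> ^ M)"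
        using T1 Jpos kt Tt_nonneg[of \<sigma> M d] by (intro frac_le) auto
      also have "\<dots> = 2 * pi / \<kappa> * r ^ M" using kappa0 tau0 by (simp add: field_simps)
      finally show ?case .
    qed
  qed
qed

fun chebU :: "nat \<Rightarrow> real \<Rightarrow> real" where
  "chebU 0 t = 1"
| "chebU (Suc 0) t = 2 * t"
| "chebU (Suc (Suc n)) t = 2 * t * chebU (Suc n) t - chebU n t"

lemma sin_chebU: "sin ((real n + 1) * x) = chebU n (cos x) * sin x"
proof (induction n rule: induct_nat_012)
  case 1
  then show ?case using sin_double[of x] by (simp add: algebra_simps)
next
  case (ge2 n)
  have "2 * cos x * sin ((real (Suc n) + 1) * x) = sin ((real (Suc n) + 2) * x) + sin ((real n + 1) * x)"
    using two_cos_sin[of x "Suc n"] by simp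
  moreover have "real (Suc (Suc n)) + 1 = real (Suc n) + 2" by simp
  ultimately have "sin ((real (Suc (Suc n)) + 1) * x) = 2 * cos x * sin ((real (Suc n) + 1) * x) - sin ((real n + 1) * x)"
    by simp
  then show ?case using ge2 by (simp add: algebra_simps)
qed simp

lemma chebU_1: "chebU n 1 = real n + 1"
  by (induction n rule: induct_nat_012) auto

lemma isCont_chebU: "isCont (chebU n) t"
proof (induction n rule: induct_nat_012)
  case (ge2 n)
  have "isCont (\<lambda>t. 2 * t * chebU (Suc n) t - chebU n t) t"
    using ge2 by (auto intro!: continuous_intros)
  then show ?case by simp
qed (auto intro!: continuous_intros)

lemma sinsin_bound: "\<bar>sin ((real a + 1) * t) * sin ((real b + 1) * t)\<bar> \<le> (real a + 1) * (real b + 1) * (sin t)\<^sup>2"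
proof -
  have "\<bar>sin ((real a + 1) * t) * sin ((real b + 1) * t)\<bar> \<le> ((real a + 1) * \<bar>sin t\<bar>) * ((real b + 1) * \<bar>sin t\<bar>)"
    unfolding abs_mult by (intro mult_mono sin_bound) auto
  then show ?thesis by (simp add: power2_eq_square algebra_simps)
qed

lemma Jint_bound:
  assumes s: "\<sigma> > 0"
  shows "\<exists>M0. \<forall>M\<ge>M0. \<forall>a b. \<bar>Jint \<sigma> M a b\<bar> \<le> 2 * ((real a + 1) * (real b + 1)) * Jint \<sigma> M 0 0"
proof -
  obtain d0 where d0: "0 < d0" "d0 \<le> pi / 2" "cos d0 > 1 - \<sigma>" using delta0_ex[OF s] by blast
  have lim0: "(\<lambda>M. Tt \<sigma> M d0 / Jint \<sigma> M 0 0) \<longlonglongrightarrow> 0" using tail_ratio[OF s d0(2,3) d0(1)] by simp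
  have "eventually (\<lambda>M. Tt \<sigma> M d0 / Jint \<sigma> M 0 0 < 1/2) sequentially"
    using order_tendstoD(2)[OF lim0, of "1/2"] by simp
  then obtain M0 where M0: "\<And>M. M \<ge> M0 \<Longrightarrow> Tt \<sigma> M d0 / Jint \<sigma> M 0 0 < 1/2"
    by (auto simp: eventually_sequentially)
  have pi2: "pi / 2 \<le> pi" using pi_gt_zero by linarith
  show ?thesis
  proof (intro exI[of _ M0] allI impI)
    fix M a b assume M: "M \<ge> M0"
    define C where "C = (real a + 1) * (real b + 1)"
    let ?f = "\<lambda>t. (\<sigma> + 2 * cos t) ^ M * (sin t)\<^sup>2"
    let ?fa = "\<lambda>t. \<bar>\<sigma> + 2 * cos t\<bar> ^ M * (sin t)\<^sup>2"
    have Jp: "Jint \<sigma> M 0 0 > 0" using J00_pos[OF s] .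
    have T: "Tt \<sigma> M d0 < Jint \<sigma> M 0 0 / 2" using M0[OF M] Jp by (simp add: field_simps)
    have "\<bar>Jint \<sigma> M a b\<bar> \<le> integral {0..pi} (\<lambda>t. C * ?fa t)"
      unfolding Jint_def
    proof (rule int_abs_bound)
      show "(\<lambda>t. (\<sigma> + 2 * cos t) ^ M * sin ((real a + 1) * t) * sin ((real b + 1) * t)) integrable_on {0..pi}"
        by (intro cint) (auto intro!: continuous_intros)
      show "(\<lambda>t. C * ?fa t) integrable_on {0..pi}"
        by (intro cint) (auto intro!: continuous_intros)
      fix t
      have "\<bar>(\<sigma> + 2 * cos t) ^ M * sin ((real a + 1) * t) * sin ((real b + 1) * t)\<bar>
          = \<bar>\<sigma> + 2 * cos t\<bar> ^ M * \<bar>sin ((real a + 1) * t) * sin ((real b + 1) * t)\<bar>"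
        by (simp add: abs_mult power_abs)
      also have "\<dots> \<le> \<bar>\<sigma> + 2 * cos t\<bar> ^ M * (C * (sin t)\<^sup>2)"
        unfolding C_def by (intro mult_left_mono sinsin_bound) auto
      finally show "\<bar>(\<sigma> + 2 * cos t) ^ M * sin ((real a + 1) * t) * sin ((real b + 1) * t)\<bar> \<le> C * ?fa t"
        by (simp add: algebra_simps)
    qed
    also have "\<dots> = C * integral {0..pi} ?fa" by simp
    also have "integral {0..pi} ?fa = integral {0..d0} ?fa + Tt \<sigma> M d0"
      unfolding Tt_def using d0 pi2 by (intro split_int) (auto intro!: continuous_intros)
    also have "integral {0..d0} ?fa = integral {0..d0} ?f"
    proof (rule integral_cong)
      fix t assume "t \<in> {0..d0}"
      then have "cos t \<ge> 0" using d0 by (intro cos_ge_zero) auto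
      then show "?fa t = ?f t" using s by simp
    qed
    also have "integral {0..d0} ?f \<le> Jint \<sigma> M 0 0 + Tt \<sigma> M d0"
    proof -
      have "Jint \<sigma> M 0 0 = integral {0..d0} ?f + integral {d0..pi} ?f"
        unfolding J00_eq using d0 pi2 by (intro split_int) (auto intro!: continuous_intros)
      then show ?thesis using tail_ge[of \<sigma> M d0] by linarith
    qed
    finally have "\<bar>Jint \<sigma> M a b\<bar> \<le> C * (Jint \<sigma> M 0 0 + Tt \<sigma> M d0 + Tt \<sigma> M d0)"
      unfolding C_def by (simp add: mult_left_mono)
    also have "\<dots> \<le> C * (2 * Jint \<sigma> M 0 0)" using T unfolding C_def by (intro mult_left_mono) auto
    finally show "\<bar>Jint \<sigma> M a b\<bar> \<le> 2 * ((real a + 1) * (real b + 1)) * Jint \<sigma> M 0 0"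
      unfolding C_def by (simp add: algebra_simps)
  qed
qed

lemma Jint_ratio_lim:
  assumes s: "\<sigma> > 0"
  shows "(\<lambda>M. Jint \<sigma> M a b / Jint \<sigma> M 0 0) \<longlonglongrightarrow> (real a + 1) * (real b + 1)"
proof (rule LIMSEQ_I)
  fix r :: real assume r: "r > 0"
  define C where "C = (real a + 1) * (real b + 1)"
  have C1: "C \<ge> 1"
  proof -
    have "1 * 1 \<le> (real a + 1) * (real b + 1)" by (intro mult_mono) auto
    then show ?thesis unfolding C_def by simp
  qed
  define \<epsilon> where "\<epsilon> = min 1 (r / 3)"
  have e0: "\<epsilon> > 0" "\<epsilon> \<le> 1" "\<epsilon> \<le> r / 3" unfolding \<epsilon>_def using r by auto
  obtain d0 where d0: "0 < d0" "d0 \<le> pi / 2" "cos d0 > 1 - \<sigma>" using delta0_ex[OF s] by blast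
  have pi2: "pi / 2 \<le> pi" using pi_gt_zero by linarith
  define \<phi> where "\<phi> t = chebU a (cos t) * chebU b (cos t)" for t
  have "isCont \<phi> 0" unfolding \<phi>_def
    by (intro isCont_mult isCont_o2[OF isCont_cos isCont_chebU])
  moreover have \<phi>0: "\<phi> 0 = C" unfolding \<phi>_def C_def by (simp add: chebU_1)
  ultimately obtain e where e: "e > 0" "\<And>t. \<bar>t\<bar> < e \<Longrightarrow> \<bar>\<phi> t - C\<bar> < \<epsilon>"
  proof -
    have "\<exists>d>0. \<forall>x. dist x 0 < d \<longrightarrow> dist (\<phi> x) (\<phi> 0) < \<epsilon>"
      using \<open>isCont \<phi> 0\<close> e0(1) unfolding continuous_at_eps_delta by blast
    then show ?thesis using that unfolding dist_real_def \<phi>0 by auto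
  qed
  define d where "d = min d0 (e / 2)"
  have d: "0 < d" "d \<le> d0" "d < e" unfolding d_def using d0 e by auto
  have lim0: "(\<lambda>M. Tt \<sigma> M d / Jint \<sigma> M 0 0) \<longlonglongrightarrow> 0" using tail_ratio[OF s d0(2,3) d(1,2)] .
  have "eventually (\<lambda>M. Tt \<sigma> M d / Jint \<sigma> M 0 0 < \<epsilon> / (1 + 2 * C)) sequentially"
    using order_tendstoD(2)[OF lim0, of "\<epsilon> / (1 + 2 * C)"] e0 C1 by auto
  then obtain N where N: "\<And>M. M \<ge> N \<Longrightarrow> Tt \<sigma> M d / Jint \<sigma> M 0 0 < \<epsilon> / (1 + 2 * C)"
    by (auto simp: eventually_sequentially)
  show "\<exists>no. \<forall>n\<ge>no. norm (Jint \<sigma> n a b / Jint \<sigma> n 0 0 - (real a + 1) * (real b + 1)) < r"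
  proof (intro exI[of _ N] allI impI)
    fix M assume M: "M \<ge> N"
    let ?f = "\<lambda>t. (\<sigma> + 2 * cos t) ^ M * (sin t)\<^sup>2"
    let ?fa = "\<lambda>t. \<bar>\<sigma> + 2 * cos t\<bar> ^ M * (sin t)\<^sup>2"
    let ?g = "\<lambda>t. (\<sigma> + 2 * cos t) ^ M * sin ((real a + 1) * t) * sin ((real b + 1) * t)"
    define D where "D t = ?g t - C * ?f t" for t
    have cD: "isCont D t" for t unfolding D_def by (auto intro!: continuous_intros)
    have Jp: "Jint \<sigma> M 0 0 > 0" using J00_pos[OF s] .
    define T where "T = Tt \<sigma> M d"
    have T0: "T \<ge> 0" unfolding T_def by (rule Tt_nonneg)
    have TN: "T / Jint \<sigma> M 0 0 < \<epsilon> / (1 + 2 * C)" unfolding T_def using N[OF M] .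
    have gi: "?g integrable_on {0..pi}" by (intro cint) (auto intro!: continuous_intros)
    have fi: "(\<lambda>t. C * ?f t) integrable_on {0..pi}" by (intro cint) (auto intro!: continuous_intros)
    have JD0: "integral {0..pi} D = integral {0..pi} ?g - integral {0..pi} (\<lambda>t. C * ?f t)"
      unfolding D_def by (rule integral_diff[OF gi fi])
    have JD: "Jint \<sigma> M a b - C * Jint \<sigma> M 0 0 = integral {0..pi} D"
      unfolding JD0 J00_eq by (simp add: Jint_def)
    also have "\<dots> = integral {0..d} D + integral {d..pi} D"
      using d d0 pi2 by (intro split_int cD) auto
    finally have JD2: "Jint \<sigma> M a b - C * Jint \<sigma> M 0 0 = integral {0..d} D + integral {d..pi} D" .
    have b1: "\<bar>integral {0..d} D\<bar> \<le> \<epsilon> * (Jint \<sigma> M 0 0 + T)"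
    proof -
      have "\<bar>integral {0..d} D\<bar> \<le> integral {0..d} (\<lambda>t. \<epsilon> * ?f t)"
      proof (rule int_abs_bound)
        show "D integrable_on {0..d}" by (intro cint cD)
        show "(\<lambda>t. \<epsilon> * ?f t) integrable_on {0..d}" by (intro cint) (auto intro!: continuous_intros)
        fix t assume t: "t \<in> {0..d}"
        have "cos t \<ge> 0" using t d d0 by (intro cos_ge_zero) auto
        then have f0: "?f t \<ge> 0" using s by auto
        have "sin ((real a + 1) * t) * sin ((real b + 1) * t) = \<phi> t * (sin t)\<^sup>2"
          unfolding \<phi>_def sin_chebU by (simp add: power2_eq_square algebra_simps)
        then have Dt: "D t = ?f t * (\<phi> t - C)" unfolding D_def by (simp add: algebra_simps)
        have pc: "\<bar>\<phi> t - C\<bar> \<le> \<epsilon>" using e(2)[of t] t d by auto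
        have "\<bar>D t\<bar> = \<bar>?f t\<bar> * \<bar>\<phi> t - C\<bar>" unfolding Dt by (rule abs_mult)
        also have "\<dots> = ?f t * \<bar>\<phi> t - C\<bar>" by (simp only: abs_of_nonneg[OF f0])
        also have "\<dots> \<le> ?f t * \<epsilon>" using pc f0 by (rule mult_left_mono)
        finally show "\<bar>D t\<bar> \<le> \<epsilon> * ?f t" by (simp add: mult.commute)
      qed
      also have "\<dots> = \<epsilon> * integral {0..d} ?f" by simp
      also have "integral {0..d} ?f \<le> Jint \<sigma> M 0 0 + T"
      proof -
        have "Jint \<sigma> M 0 0 = integral {0..d} ?f + integral {d..pi} ?f"
          unfolding J00_eq using d d0 pi2 by (intro split_int) (auto intro!: continuous_intros)
        then show ?thesis using tail_ge[of \<sigma> M d] unfolding T_def by linarith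
      qed
      finally show ?thesis using e0 by (simp add: mult_left_mono)
    qed
    have b2: "\<bar>integral {d..pi} D\<bar> \<le> 2 * C * T"
    proof -
      have "\<bar>integral {d..pi} D\<bar> \<le> integral {d..pi} (\<lambda>t. 2 * C * ?fa t)"
      proof (rule int_abs_bound)
        show "D integrable_on {d..pi}" by (intro cint cD)
        show "(\<lambda>t. 2 * C * ?fa t) integrable_on {d..pi}" by (intro cint) (auto intro!: continuous_intros)
        fix t
        have "\<bar>D t\<bar> \<le> \<bar>?g t\<bar> + \<bar>C * ?f t\<bar>" unfolding D_def by (rule abs_triangle_ineq4)
        also have "\<bar>?g t\<bar> = \<bar>\<sigma> + 2 * cos t\<bar> ^ M * \<bar>sin ((real a + 1) * t) * sin ((real b + 1) * t)\<bar>"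
          by (simp add: abs_mult power_abs)
        also have "\<dots> \<le> \<bar>\<sigma> + 2 * cos t\<bar> ^ M * (C * (sin t)\<^sup>2)"
          unfolding C_def by (intro mult_left_mono sinsin_bound) auto
        also have "\<bar>C * ?f t\<bar> = C * ?fa t" using C1 by (simp add: abs_mult power_abs)
        finally show "\<bar>D t\<bar> \<le> 2 * C * ?fa t" by (simp add: algebra_simps)
      qed
      also have "\<dots> = 2 * C * T" unfolding T_def Tt_def by simp
      finally show ?thesis .
    qed
    have main: "\<bar>Jint \<sigma> M a b - C * Jint \<sigma> M 0 0\<bar> \<le> \<epsilon> * (Jint \<sigma> M 0 0 + T) + 2 * C * T"
      unfolding JD2 using b1 b2 abs_triangle_ineq[of "integral {0..d} D" "integral {d..pi} D"] by linarith
    have eq: "\<bar>Jint \<sigma> M a b / Jint \<sigma> M 0 0 - C\<bar> = \<bar>Jint \<sigma> M a b - C * Jint \<sigma> M 0 0\<bar> / Jint \<sigma> M 0 0"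
      using Jp by (simp add: field_simps)
    have "\<bar>Jint \<sigma> M a b / Jint \<sigma> M 0 0 - C\<bar> \<le> (\<epsilon> * (Jint \<sigma> M 0 0 + T) + 2 * C * T) / Jint \<sigma> M 0 0"
      unfolding eq using main Jp by (intro divide_right_mono) auto
    also have "\<dots> = \<epsilon> + (\<epsilon> + 2 * C) * (T / Jint \<sigma> M 0 0)"
      using Jp by (simp add: field_simps)
    also have "\<dots> \<le> \<epsilon> + (1 + 2 * C) * (T / Jint \<sigma> M 0 0)"
      using e0 T0 Jp by (intro add_left_mono mult_right_mono) auto
    also have "(1 + 2 * C) * (T / Jint \<sigma> M 0 0) < \<epsilon>"
      using TN C1 by (simp add: field_simps)
    finally show "norm (Jint \<sigma> M a b / Jint \<sigma> M 0 0 - (real a + 1) * (real b + 1)) < r"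
      using e0 unfolding C_def by simp
  qed
qed

lemma Wk00_pos: "\<sigma> > 0 \<Longrightarrow> Wk \<sigma> M 0 0 > 0"
  using J00_pos[of \<sigma> M] by (simp add: Wk_Jint)

lemma Wk_ratio_lim:
  assumes "\<sigma> > 0"
  shows "(\<lambda>M. Wk \<sigma> M a b / Wk \<sigma> M 0 0) \<longlonglongrightarrow> (real a + 1) * (real b + 1)"
  using Jint_ratio_lim[OF assms, of a b] by (simp add: Wk_Jint)

lemma Wk_bound:
  assumes s: "\<sigma> > 0"
  shows "\<exists>M0. \<forall>M\<ge>M0. \<forall>a b. Wk \<sigma> M a b \<le> 2 * ((real a + 1) * (real b + 1)) * Wk \<sigma> M 0 0"
proof -
  obtain M0 where M0: "\<And>M a b. M \<ge> M0 \<Longrightarrow> \<bar>Jint \<sigma> M a b\<bar> \<le> 2 * ((real a + 1) * (real b + 1)) * Jint \<sigma> M 0 0"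
    using Jint_bound[OF s] by blast
  show ?thesis
  proof (intro exI[of _ M0] allI impI)
    fix M a b assume "M \<ge> M0"
    then have "\<bar>Jint \<sigma> M a b\<bar> \<le> 2 * ((real a + 1) * (real b + 1)) * Jint \<sigma> M 0 0" by (rule M0)
    then have "Jint \<sigma> M a b \<le> 2 * ((real a + 1) * (real b + 1)) * Jint \<sigma> M 0 0" by (rule order_trans[OF abs_ge_self])
    then have "2 / pi * Jint \<sigma> M a b \<le> 2 / pi * (2 * ((real a + 1) * (real b + 1)) * Jint \<sigma> M 0 0)"
      by (intro mult_left_mono) auto
    then show "Wk \<sigma> M a b \<le> 2 * ((real a + 1) * (real b + 1)) * Wk \<sigma> M 0 0"
      by (simp add: Wk_Jint algebra_simps)
  qed
qed

lemma has_sum_Sigma_nonneg: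
  fixes f :: "'a \<times> 'b \<Rightarrow> real"
  assumes fib: "\<And>x. x \<in> A \<Longrightarrow> ((\<lambda>y. f (x, y)) has_sum g x) (B x)"
    and g: "(g has_sum S) A"
    and nn: "\<And>x y. x \<in> A \<Longrightarrow> y \<in> B x \<Longrightarrow> f (x, y) \<ge> 0"
  shows "(f has_sum S) (Sigma A B)"
proof -
  have "f summable_on Sigma A B"
    by (rule summable_on_SigmaI[where g = g]) (use fib g nn in \<open>auto dest: has_sum_imp_summable\<close>)
  then have h: "(f has_sum infsum f (Sigma A B)) (Sigma A B)" by (rule has_sum_infsum)
  have "(g has_sum infsum f (Sigma A B)) A" by (rule has_sum_SigmaD[OF h fib])
  with g have "infsum f (Sigma A B) = S" using has_sum_unique by blast
  then show ?thesis using h by simp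
qed

definition nbr :: "nat \<Rightarrow> nat set" where
  "nbr a = {b. b \<le> Suc a \<and> a \<le> Suc b}"

lemma finite_nbr[simp]: "finite (nbr a)"
  unfolding nbr_def by (rule finite_subset[of _ "{..Suc a}"]) auto

definition tri :: "(nat \<Rightarrow> nat \<Rightarrow> real) \<Rightarrow> bool" where
  "tri S \<longleftrightarrow> (\<forall>a b. b \<notin> nbr a \<longrightarrow> S a b = 0)"

fun bk :: "(nat \<Rightarrow> nat \<Rightarrow> real) \<Rightarrow> (nat \<Rightarrow> nat \<Rightarrow> real) \<Rightarrow> (nat \<Rightarrow> real) \<Rightarrow> nat \<Rightarrow> nat \<Rightarrow> real" where
  "bk S c v 0 a = v a"
| "bk S c v (Suc n) a = (\<Sum>b\<in>nbr a. S a b * c 1 b * bk S (\<lambda>k. c (Suc k)) v n b)"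

definition Gf :: "(nat \<Rightarrow> nat \<Rightarrow> real) \<Rightarrow> (nat \<Rightarrow> nat \<Rightarrow> real) \<Rightarrow> (nat \<Rightarrow> real) \<Rightarrow> nat \<Rightarrow> nat list \<Rightarrow> real" where
  "Gf S c v n g = (\<Prod>k\<in>{1..n}. c k (g ! k)) * (\<Prod>k<n. S (g ! k) (g ! Suc k)) * v (g ! n)"

lemma Gf_Cons: "Gf S c v (Suc n) (a # g) = S a (g ! 0) * c 1 (g ! 0) * Gf S (\<lambda>k. c (Suc k)) v n g"
proof -
  have "(\<Prod>k\<in>{1..Suc n}. c k ((a # g) ! k)) = (\<Prod>k\<in>{0..n}. c (Suc k) (g ! k))"
    using prod.shift_bounds_cl_Suc_ivl[of "\<lambda>k. c k ((a # g) ! k)" 0 n] by simp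
  also have "\<dots> = c 1 (g ! 0) * (\<Prod>k\<in>{1..n}. c (Suc k) (g ! k))"
    by (simp add: prod.atLeast_Suc_atMost)
  finally have 1: "(\<Prod>k\<in>{1..Suc n}. c k ((a # g) ! k)) = c 1 (g ! 0) * (\<Prod>k\<in>{1..n}. c (Suc k) (g ! k))" .
  have 2: "(\<Prod>k<Suc n. S ((a # g) ! k) ((a # g) ! Suc k)) = S a (g ! 0) * (\<Prod>k<n. S (g ! k) (g ! Suc k))"
    by (subst prod.lessThan_Suc_shift) simp
  show ?thesis unfolding Gf_def 1 2 by simp
qed

lemma bk_nonneg:
  assumes "\<And>a b. S a b \<ge> 0" "\<And>k b. c k b \<ge> 0" "\<And>b. v b \<ge> 0"
  shows "bk S c v n a \<ge> 0"
  using assms(2) by (induction n arbitrary: a c) (auto intro!: sum_nonneg mult_nonneg_nonneg assms(1,3))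

lemma Gf_nonneg:
  assumes "\<And>a b. S a b \<ge> 0" "\<And>k b. c k b \<ge> 0" "\<And>b. v b \<ge> 0"
  shows "Gf S c v n g \<ge> 0"
  unfolding Gf_def using assms by (intro mult_nonneg_nonneg prod_nonneg) auto

lemma fiber_has_sum:
  assumes tri: "tri S" and S0: "\<And>a b. S a b \<ge> 0" and c0: "\<And>k b. c k b \<ge> 0" and v0: "\<And>b. v b \<ge> 0"
  shows "(Gf S c v n has_sum bk S c v n a) {g. length g = Suc n \<and> g ! 0 = a}"
  using c0
proof (induction n arbitrary: a c)
  case 0
  have "{g. length g = Suc 0 \<and> g ! 0 = a} = {[a]}"
    by (auto simp: length_Suc_conv)
  moreover have "(Gf S c v 0 has_sum v a) {[a]}"
    using has_sum_finite[of "{[a]}" "Gf S c v 0"] by (simp add: Gf_def)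
  ultimately show ?case by simp
next
  case (Suc n)
  let ?c = "\<lambda>k. c (Suc k)"
  define F where "F p = S a (fst p) * c 1 (fst p) * Gf S ?c v n (snd p)" for p :: "nat \<times> nat list"
  define B where "B b = {g :: nat list. length g = Suc n \<and> g ! 0 = b}" for b :: nat
  have fib: "((\<lambda>g. F (b, g)) has_sum (S a b * c 1 b * bk S ?c v n b)) (B b)" for b
    unfolding F_def B_def using has_sum_cmult_right[OF Suc.IH[of ?c b]] Suc.prems by simp
  have outer: "((\<lambda>b. S a b * c 1 b * bk S ?c v n b) has_sum bk S c v (Suc n) a) UNIV"
  proof -
    have "((\<lambda>b. S a b * c 1 b * bk S ?c v n b) has_sum bk S c v (Suc n) a) (nbr a)"
      by (simp add: has_sum_finite)
    then show ?thesis
      by (rule has_sum_cong_neutral[THEN iffD1, rotated -1]) (use tri in \<open>auto simp: tri_def\<close>)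
  qed
  have F0: "F (b, g) \<ge> 0" for b g
    unfolding F_def using S0 Suc.prems v0 by (auto intro!: mult_nonneg_nonneg Gf_nonneg)
  have Sig: "(F has_sum bk S c v (Suc n) a) (Sigma UNIV B)"
    by (rule has_sum_Sigma_nonneg[OF fib outer]) (use F0 in auto)
  define h where "h p = a # snd p" for p :: "nat \<times> nat list"
  have inj: "inj_on h (Sigma UNIV B)"
    unfolding h_def B_def by (rule inj_onI) auto
  have img: "h ` Sigma UNIV B = {g. length g = Suc (Suc n) \<and> g ! 0 = a}"
  proof safe
    fix g assume g: "length g = Suc (Suc n)" "a = g ! 0"
    then obtain g' where "g = a # g'" "length g' = Suc n" by (cases g) auto
    then show "g \<in> h ` Sigma UNIV B" unfolding h_def B_def
      by (intro image_eqI[of _ _ "(g' ! 0, g')"]) auto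
  qed (auto simp: h_def B_def)
  have eq: "(Gf S c v (Suc n) \<circ> h) p = F p" if "p \<in> Sigma UNIV B" for p
    using that unfolding h_def F_def B_def by (cases p) (auto simp: Gf_Cons)
  have "((Gf S c v (Suc n) \<circ> h) has_sum bk S c v (Suc n) a) (Sigma UNIV B)"
    using Sig by (subst has_sum_cong[OF eq]) auto
  then show ?case using has_sum_reindex[OF inj, of "Gf S c v (Suc n)"] unfolding img by blast
qed

lemma lists_Sigma:
  fixes n :: nat
  defines "B \<equiv> \<lambda>a. {g :: nat list. length g = Suc n \<and> g ! 0 = a}"
  shows "inj_on snd (Sigma UNIV B)" and "snd ` Sigma UNIV B = {g. length g = Suc n}"
proof -
  show "inj_on snd (Sigma UNIV B)" unfolding B_def by (rule inj_onI) auto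
  show "snd ` Sigma UNIV B = {g. length g = Suc n}"
  proof safe
    fix g :: "nat list" assume "length g = Suc n"
    then show "g \<in> snd ` Sigma UNIV B" unfolding B_def by (intro image_eqI[of _ _ "(g ! 0, g)"]) auto
  qed (auto simp: B_def)
qed

lemma total_has_sum:
  assumes tri: "tri S" and S0: "\<And>a b. S a b \<ge> 0" and c0: "\<And>k b. c k b \<ge> 0" and v0: "\<And>b. v b \<ge> 0"
    and u0: "\<And>a. u a \<ge> 0"
    and outer: "((\<lambda>a. u a * bk S c v n a) has_sum X) UNIV"
  shows "((\<lambda>g. u (g ! 0) * Gf S c v n g) has_sum X) {g. length g = Suc n}"
proof -
  define B where "B a = {g :: nat list. length g = Suc n \<and> g ! 0 = a}" for a :: nat
  have fib: "((\<lambda>g. u (g ! 0) * Gf S c v n g) has_sum (u a * bk S c v n a)) (B a)" for a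
  proof -
    have "((\<lambda>g. u a * Gf S c v n g) has_sum (u a * bk S c v n a)) (B a)"
      unfolding B_def by (intro has_sum_cmult_right fiber_has_sum assms)
    then show ?thesis by (rule has_sum_cong[THEN iffD1, rotated]) (auto simp: B_def)
  qed
  have "((\<lambda>p. u (snd p ! 0) * Gf S c v n (snd p)) has_sum X) (Sigma UNIV B)"
    by (rule has_sum_Sigma_nonneg[OF _ outer, where f = "\<lambda>p. u (snd p ! 0) * Gf S c v n (snd p)"])
       (use fib in \<open>auto intro!: mult_nonneg_nonneg Gf_nonneg assms\<close>)
  then show ?thesis
    using has_sum_reindex[OF lists_Sigma(1)[of n], of "\<lambda>g. u (g ! 0) * Gf S c v n g" X] lists_Sigma(2)[of n]
    unfolding B_def by (simp add: o_def)
qed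

lemma total_has_sum_rev:
  assumes tri: "tri S" and S0: "\<And>a b. S a b \<ge> 0" and c0: "\<And>k b. c k b \<ge> 0" and v0: "\<And>b. v b \<ge> 0"
    and u0: "\<And>a. u a \<ge> 0"
    and lists: "((\<lambda>g. u (g ! 0) * Gf S c v n g) has_sum X) {g. length g = Suc n}"
  shows "((\<lambda>a. u a * bk S c v n a) has_sum X) UNIV"
proof -
  define B where "B a = {g :: nat list. length g = Suc n \<and> g ! 0 = a}" for a :: nat
  have fib: "((\<lambda>g. u (g ! 0) * Gf S c v n g) has_sum (u a * bk S c v n a)) (B a)" for a
  proof -
    have "((\<lambda>g. u a * Gf S c v n g) has_sum (u a * bk S c v n a)) (B a)"
      unfolding B_def by (intro has_sum_cmult_right fiber_has_sum assms)
    then show ?thesis by (rule has_sum_cong[THEN iffD1, rotated]) (auto simp: B_def)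
  qed
  have "((\<lambda>p. u (snd p ! 0) * Gf S c v n (snd p)) has_sum X) (Sigma UNIV B)"
    using lists has_sum_reindex[OF lists_Sigma(1)[of n], of "\<lambda>g. u (g ! 0) * Gf S c v n g" X] lists_Sigma(2)[of n]
    unfolding B_def by (simp add: o_def)
  then show ?thesis
    by (rule has_sum_SigmaD) (use fib in auto)
qed

lemma bk_cong:
  assumes "\<And>k b. k \<in> {1..n} \<Longrightarrow> c k b = c' k b"
  shows "bk S c v n a = bk S c' v n a"
  using assms
proof (induction n arbitrary: a c c')
  case (Suc n)
  have "bk S (\<lambda>k. c (Suc k)) v n b = bk S (\<lambda>k. c' (Suc k)) v n b" for b
    by (rule Suc.IH) (use Suc.prems in auto)
  moreover have "c 1 b = c' 1 b" for b using Suc.prems by auto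
  ultimately show ?case by simp
qed simp

lemma bk_comp: "bk S c v (n + m) a = bk S c (bk S (\<lambda>k. c (k + n)) v m) n a"
proof (induction n arbitrary: a c)
  case 0
  then show ?case by simp
next
  case (Suc n)
  have "bk S (\<lambda>k. c (Suc k)) v (n + m) b = bk S (\<lambda>k. c (Suc k)) (bk S (\<lambda>k. c (k + Suc n)) v m) n b" for b
    using Suc.IH[of "\<lambda>k. c (Suc k)" b] by simp
  then show ?case by simp
qed

lemma bk_last: "bk S c v (Suc n) a = bk S (c(Suc n := (\<lambda>_. 1))) (\<lambda>b. c (Suc n) b * v b) (Suc n) a"
proof (induction n arbitrary: a c)
  case 0
  then show ?case by (simp add: mult.assoc)
next
  case (Suc n)
  have e: "(\<lambda>k. (c(Suc (Suc n) := (\<lambda>_. 1))) (Suc k)) = (\<lambda>k. c (Suc k))(Suc n := (\<lambda>_. 1))"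
    by (rule ext) simp
  have "bk S (\<lambda>k. c (Suc k)) v (Suc n) b = bk S ((\<lambda>k. c (Suc k))(Suc n := (\<lambda>_. 1))) (\<lambda>b. c (Suc (Suc n)) b * v b) (Suc n) b" for b
    using Suc.IH[of "\<lambda>k. c (Suc k)" b] by simp
  then show ?case by (subst bk.simps, subst bk.simps) (simp only: e fun_upd_apply, simp)
qed

lemma bk_mono:
  assumes S0: "\<And>a b. S a b \<ge> 0" and c: "\<And>k b. 0 \<le> c k b" "\<And>k b. c k b \<le> c' k b"
    and v: "\<And>b. 0 \<le> v b" "\<And>b. v b \<le> v' b"
  shows "bk S c v n a \<le> bk S c' v' n a"
  using c
proof (induction n arbitrary: a c c')
  case 0
  then show ?case using v by simp
next
  case (Suc n)
  have "S a b * c 1 b * bk S (\<lambda>k. c (Suc k)) v n b \<le> S a b * c' 1 b * bk S (\<lambda>k. c' (Suc k)) v' n b" for b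
  proof (intro mult_mono)
    show "bk S (\<lambda>k. c (Suc k)) v n b \<le> bk S (\<lambda>k. c' (Suc k)) v' n b" by (rule Suc.IH) (use Suc.prems in auto)
    show "0 \<le> bk S (\<lambda>k. c (Suc k)) v n b" by (rule bk_nonneg) (use S0 Suc.prems v in auto)
    show "0 \<le> S a b * c' 1 b" using S0 Suc.prems(1)[of 1 b] Suc.prems(2)[of 1 b] by simp
  qed (use S0 Suc.prems in auto)
  then show ?case by (simp add: sum_mono)
qed

lemma bk_cmult: "bk S c (\<lambda>b. r * v b) n a = r * bk S c v n a"
  by (induction n arbitrary: a c) (auto simp: sum_distrib_left algebra_simps)

lemma bk_tendsto:
  assumes "\<And>b. (\<lambda>M. v M b) \<longlonglongrightarrow> w b"
  shows "(\<lambda>M. bk S c (v M) n a) \<longlonglongrightarrow> bk S c w n a"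
proof (induction n arbitrary: a c)
  case 0
  then show ?case using assms by simp
next
  case (Suc n)
  show ?case by (simp, intro tendsto_sum tendsto_mult tendsto_const Suc.IH)
qed

lemma bk_bound:
  assumes S0: "\<And>a b. S a b \<ge> 0" and R: "\<And>a. (\<Sum>b\<in>nbr a. S a b) \<le> R"
    and c: "\<And>k b. 0 \<le> c k b" "\<And>k b. c k b \<le> 1"
    and v: "\<And>b. 0 \<le> v b" "\<And>b. v b \<le> B"
  shows "bk S c v n a \<le> R ^ n * B"
  using c
proof (induction n arbitrary: a c)
  case 0
  then show ?case using v by simp
next
  case (Suc n)
  have "bk S c v (Suc n) a \<le> (\<Sum>b\<in>nbr a. S a b * (R ^ n * B))"
  proof (simp, rule sum_mono)
    fix b
    have "S a b * c 1 b * bk S (\<lambda>k. c (Suc k)) v n b \<le> S a b * 1 * (R ^ n * B)"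
    proof (intro mult_mono)
      show "bk S (\<lambda>k. c (Suc k)) v n b \<le> R ^ n * B" by (rule Suc.IH) (use Suc.prems in auto)
      show "0 \<le> bk S (\<lambda>k. c (Suc k)) v n b" by (rule bk_nonneg) (use S0 Suc.prems v in auto)
    qed (use S0 Suc.prems in auto)
    then show "S a b * c (Suc 0) b * bk S (\<lambda>k. c (Suc k)) v n b \<le> S a b * (R ^ n * B)" by simp
  qed
  also have "\<dots> = (\<Sum>b\<in>nbr a. S a b) * (R ^ n * B)" by (simp add: sum_distrib_right)
  also have "\<dots> \<le> R * (R ^ n * B)"
  proof (rule mult_right_mono[OF R])
    have "0 \<le> bk S c v 0 a" using v by simp
    show "0 \<le> R ^ n * B"
    proof -
      have "0 \<le> v a" by (rule v)
      also have "\<dots> \<le> B" by (rule v)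
      finally have B0: "0 \<le> B" .
      have "0 \<le> (\<Sum>b\<in>nbr a. S a b)" using S0 by (simp add: sum_nonneg)
      then have "0 \<le> R" using R[of a] by linarith
      then show ?thesis using B0 by simp
    qed
  qed
  finally show ?case by simp
qed

lemma Gf_rev:
  assumes sym: "\<And>a b. S a b = S b a" and len: "length g = Suc n"
  shows "u (g ! 0) * c 0 (g ! 0) * Gf S c v n g
       = v (rev g ! 0) * c n (rev g ! 0) * Gf S (\<lambda>k. c (n - k)) u n (rev g)"
proof -
  have rv: "rev g ! k = g ! (n - k)" if "k \<le> n" for k
    using that len by (simp add: rev_nth)
  have P1: "c 0 (g ! 0) * (\<Prod>k\<in>{1..n}. c k (g ! k)) = (\<Prod>k\<in>{0..n}. c k (g ! k))"
    by (simp add: prod.atLeast_Suc_atMost)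
  have P2: "c n (rev g ! 0) * (\<Prod>k\<in>{1..n}. c (n - k) (rev g ! k)) = (\<Prod>k\<in>{0..n}. c (n - k) (g ! (n - k)))"
    by (simp add: prod.atLeast_Suc_atMost rv)
  have P3: "(\<Prod>k\<in>{0..n}. c (n - k) (g ! (n - k))) = (\<Prod>k\<in>{0..n}. c k (g ! k))"
    using prod.atLeastAtMost_rev[of "\<lambda>k. c k (g ! k)" 0 n] by simp
  have Q: "(\<Prod>k<n. S (rev g ! k) (rev g ! Suc k)) = (\<Prod>k<n. S (g ! k) (g ! Suc k))"
  proof -
    have "(\<Prod>k<n. S (rev g ! k) (rev g ! Suc k)) = (\<Prod>k<n. (\<lambda>j. S (g ! Suc j) (g ! j)) (n - Suc k))"
      by (rule prod.cong) (auto simp: rv Suc_diff_Suc)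
    also have "\<dots> = (\<Prod>j<n. S (g ! Suc j) (g ! j))" by (rule prod.nat_diff_reindex)
    also have "\<dots> = (\<Prod>k<n. S (g ! k) (g ! Suc k))" by (simp add: sym)
    finally show ?thesis .
  qed
  have e1: "rev g ! n = g ! 0" using rv[of n] by simp
  have e2: "rev g ! 0 = g ! n" using rv[of 0] by simp
  show ?thesis
    unfolding Gf_def Q e1
    using P1 P2 P3 by (simp add: e2 algebra_simps)
qed

lemma transpose_has_sum:
  assumes tri: "tri S" and S0: "\<And>a b. S a b \<ge> 0" and sym: "\<And>a b. S a b = S b a"
    and c0: "\<And>k b. c k b \<ge> 0" and u0: "\<And>a. u a \<ge> 0" and v0: "\<And>b. v b \<ge> 0"
    and hs: "((\<lambda>a. u a * c 0 a * bk S c v n a) has_sum X) UNIV"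
  shows "((\<lambda>a. v a * c n a * bk S (\<lambda>k. c (n - k)) u n a) has_sum X) UNIV"
proof -
  have "((\<lambda>g. (u (g ! 0) * c 0 (g ! 0)) * Gf S c v n g) has_sum X) {g. length g = Suc n}"
    by (rule total_has_sum[where u = "\<lambda>a. u a * c 0 a"]) (use assms in auto)
  then have "((\<lambda>g. v (rev g ! 0) * c n (rev g ! 0) * Gf S (\<lambda>k. c (n - k)) u n (rev g)) has_sum X) {g. length g = Suc n}"
    by (rule has_sum_cong[THEN iffD1, rotated]) (rule Gf_rev[OF sym], simp)
  then have H: "(((\<lambda>g. (v (g ! 0) * c n (g ! 0)) * Gf S (\<lambda>k. c (n - k)) u n g) \<circ> rev) has_sum X) {g. length g = Suc n}"
    by (simp add: o_def)
  have inj: "inj_on rev {g :: nat list. length g = Suc n}" by (rule inj_onI) simp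
  have img: "rev ` {g :: nat list. length g = Suc n} = {g. length g = Suc n}"
  proof safe
    fix g :: "nat list" assume "length g = Suc n"
    then show "g \<in> rev ` {g. length g = Suc n}" by (intro image_eqI[of _ _ "rev g"]) auto
  qed auto
  have L: "((\<lambda>g. (\<lambda>a. v a * c n a) (g ! 0) * Gf S (\<lambda>k. c (n - k)) u n g) has_sum X) {g. length g = Suc n}"
    using has_sum_reindex[OF inj, of "\<lambda>g. (v (g ! 0) * c n (g ! 0)) * Gf S (\<lambda>k. c (n - k)) u n g" X] H
    unfolding img by blast
  show ?thesis
    by (rule total_has_sum_rev[OF tri S0 c0 u0 _ L]) (use v0 c0 in auto)
qed

definition sk :: "real \<Rightarrow> nat \<Rightarrow> nat \<Rightarrow> real" where
  "sk \<sigma> a b = (if a = b then \<sigma> else if Suc a = b \<or> Suc b = a then 1 else 0)"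

lemma nbr_0: "nbr 0 = {0, 1}" unfolding nbr_def by auto
lemma nbr_Suc: "nbr (Suc a) = {a, Suc a, Suc (Suc a)}" unfolding nbr_def by auto

lemma sum_nbr: "(\<Sum>b\<in>nbr a. f b) = (if a = 0 then f 0 + f 1 else f (a - 1) + f a + f (Suc a))"
  by (cases a) (auto simp: nbr_0 nbr_Suc add.assoc)

lemma sk_tri: "tri (sk \<sigma>)" unfolding tri_def sk_def nbr_def by auto
lemma sk_nonneg: "\<sigma> \<ge> 0 \<Longrightarrow> sk \<sigma> a b \<ge> 0" unfolding sk_def by auto
lemma sk_sym: "sk \<sigma> a b = sk \<sigma> b a" unfolding sk_def by auto

lemma sk_rowsum: "\<sigma> \<ge> 0 \<Longrightarrow> (\<Sum>b\<in>nbr a. sk \<sigma> a b) \<le> 2 + \<sigma>"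
  unfolding sum_nbr by (auto simp: sk_def)

lemma harmonic: "bk (sk \<sigma>) (\<lambda>_ _. 1) (\<lambda>b. real b + 1) n a = (2 + \<sigma>) ^ n * (real a + 1)"
proof (induction n arbitrary: a)
  case (Suc n)
  have "bk (sk \<sigma>) (\<lambda>_ _. 1) (\<lambda>b. real b + 1) (Suc n) a = (\<Sum>b\<in>nbr a. sk \<sigma> a b * ((2 + \<sigma>) ^ n * (real b + 1)))"
    using Suc.IH by simp
  also have "\<dots> = (2 + \<sigma>) ^ n * (\<Sum>b\<in>nbr a. sk \<sigma> a b * (real b + 1))"
    by (simp add: sum_distrib_left algebra_simps)
  also have "(\<Sum>b\<in>nbr a. sk \<sigma> a b * (real b + 1)) = (2 + \<sigma>) * (real a + 1)"
    unfolding sum_nbr by (auto simp: sk_def algebra_simps of_nat_diff)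
  finally show ?case by (simp add: algebra_simps)
qed simp

lemma Wk_zero: "b > a + M \<Longrightarrow> Wk \<sigma> M a b = 0"
  by (induction M arbitrary: a) auto

lemma Wk_step: "(\<Sum>c\<in>nbr a. sk \<sigma> a c * Wk \<sigma> M c b) = Wk \<sigma> (Suc M) a b"
  unfolding sum_nbr by (cases a) (auto simp: sk_def)

lemma bk_Wk: "bk (sk \<sigma>) (\<lambda>_ _. 1) v M a = (\<Sum>b\<in>{..a + M}. Wk \<sigma> M a b * v b)"
proof (induction M arbitrary: a)
  case 0
  have "(\<Sum>b\<in>{..a}. Wk \<sigma> 0 a b * v b) = (\<Sum>b\<in>{..a}. if b = a then v b else 0)"
    by (rule sum.cong) auto
  then show ?case by simp
next
  case (Suc M)
  have ext: "(\<Sum>b\<in>{..c + M}. Wk \<sigma> M c b * v b) = (\<Sum>b\<in>{..a + Suc M}. Wk \<sigma> M c b * v b)" if "c \<in> nbr a" for c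
    using that unfolding nbr_def by (intro sum.mono_neutral_left) (auto simp: Wk_zero)
  have "bk (sk \<sigma>) (\<lambda>_ _. 1) v (Suc M) a = (\<Sum>c\<in>nbr a. sk \<sigma> a c * (\<Sum>b\<in>{..a + Suc M}. Wk \<sigma> M c b * v b))"
    using Suc.IH ext by simp
  also have "\<dots> = (\<Sum>b\<in>{..a + Suc M}. (\<Sum>c\<in>nbr a. sk \<sigma> a c * Wk \<sigma> M c b) * v b)"
    by (simp add: sum_distrib_left sum_distrib_right sum.swap[of _ "nbr a"] algebra_simps)
  also have "\<dots> = (\<Sum>b\<in>{..a + Suc M}. Wk \<sigma> (Suc M) a b * v b)"
    by (simp add: Wk_step)
  finally show ?case .
qed

lemma Wk_has_sum: "((\<lambda>b. Wk \<sigma> M a b * v b) has_sum bk (sk \<sigma>) (\<lambda>_ _. 1) v M a) UNIV"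
proof -
  have "((\<lambda>b. Wk \<sigma> M a b * v b) has_sum bk (sk \<sigma>) (\<lambda>_ _. 1) v M a) {..a + M}"
    unfolding bk_Wk by (rule has_sum_finite) simp
  then show ?thesis
    by (rule has_sum_cong_neutral[THEN iffD1, rotated -1]) (auto simp: Wk_zero)
qed

lemma trans_P_sk:
  assumes s: "\<sigma> > 0"
  shows "trans_P \<sigma> a b = sk \<sigma> a b * (real b + 1) / ((real a + 1) * (2 + \<sigma>))"
proof -
  consider "b = Suc a" | "b = a" | "Suc b = a" | "b \<noteq> Suc a \<and> b \<noteq> a \<and> Suc b \<noteq> a" by blast
  then show ?thesis
  proof cases
    case 1
    then show ?thesis by (simp add: trans_P_def sk_def ac_simps)
  next
    case 2
    then show ?thesis by (simp add: trans_P_def sk_def mult.commute[of \<sigma>])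
  next
    case 3
    then show ?thesis by (auto simp: trans_P_def sk_def ac_simps)
  next
    case 4
    then show ?thesis by (auto simp: trans_P_def sk_def)
  qed
qed

lemma trans_P_tri: "\<sigma> > 0 \<Longrightarrow> tri (trans_P \<sigma>)"
  using sk_tri[of \<sigma>] unfolding tri_def by (simp add: trans_P_sk)

lemma trans_P_nonneg: "\<sigma> > 0 \<Longrightarrow> trans_P \<sigma> a b \<ge> 0"
  by (simp add: trans_P_sk sk_nonneg)

lemma aux_P:
  fixes s f e d C X :: real
  assumes "e > 0" "f > 0" "d > 0"
  shows "(s * f / (e * d)) * C * (X / (f * d ^ n)) = s * C * X / (e * d ^ Suc n)"
  using assms by (simp add: field_simps)

lemma bk_P:
  assumes s: "\<sigma> > 0"
  shows "bk (trans_P \<sigma>) c v n a = bk (sk \<sigma>) c (\<lambda>b. (real b + 1) * v b) n a / ((real a + 1) * (2 + \<sigma>) ^ n)"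
proof (induction n arbitrary: a c)
  case 0
  then show ?case by simp
next
  case (Suc n)
  have "bk (trans_P \<sigma>) c v (Suc n) a = (\<Sum>b\<in>nbr a. trans_P \<sigma> a b * c 1 b * bk (trans_P \<sigma>) (\<lambda>k. c (Suc k)) v n b)"
    by simp
  also have "\<dots> = (\<Sum>b\<in>nbr a. sk \<sigma> a b * c 1 b * bk (sk \<sigma>) (\<lambda>k. c (Suc k)) (\<lambda>b. (real b + 1) * v b) n b / ((real a + 1) * (2 + \<sigma>) ^ Suc n))"
  proof (rule sum.cong[OF refl])
    fix b
    show "trans_P \<sigma> a b * c 1 b * bk (trans_P \<sigma>) (\<lambda>k. c (Suc k)) v n b
        = sk \<sigma> a b * c 1 b * bk (sk \<sigma>) (\<lambda>k. c (Suc k)) (\<lambda>b. (real b + 1) * v b) n b / ((real a + 1) * (2 + \<sigma>) ^ Suc n)"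
      unfolding Suc.IH trans_P_sk[OF s] using s by (intro aux_P) auto
  qed
  also have "\<dots> = bk (sk \<sigma>) c (\<lambda>b. (real b + 1) * v b) (Suc n) a / ((real a + 1) * (2 + \<sigma>) ^ Suc n)"
    by (simp add: sum_divide_distrib)
  finally show ?case .
qed

lemma prod_if01:
  assumes "finite A"
  shows "(\<Prod>k\<in>A. if P k then (1::real) else 0) = (if \<forall>k\<in>A. P k then 1 else 0)"
  using assms by (induction A rule: finite_induct) auto

lemma seq_facts:
  fixes w :: "nat \<Rightarrow> real"
  assumes w0: "\<And>n. w n \<ge> 0" and sm: "summable (\<lambda>n. real n * w n)"
  shows "summable w"
    and "((\<lambda>n. (real n + 1) * w n) has_sum (\<Sum>m. (real m + 1) * w m)) UNIV"
    and "(w has_sum (\<Sum>n. w n)) UNIV"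
proof -
  show sw: "summable w"
  proof (rule summable_comparison_test'[OF sm, of 1])
    fix n :: nat assume "n \<ge> 1"
    then have "1 * w n \<le> real n * w n" using w0[of n] by (intro mult_right_mono) auto
    then show "norm (w n) \<le> real n * w n" using w0[of n] by simp
  qed
  have "summable (\<lambda>n. real n * w n + w n)" by (intro summable_add sm sw)
  then have s1: "summable (\<lambda>n. (real n + 1) * w n)" by (simp add: distrib_right)
  show "((\<lambda>n. (real n + 1) * w n) has_sum (\<Sum>m. (real m + 1) * w m)) UNIV"
    by (rule sums_nonneg_imp_has_sum[OF summable_sums[OF s1]]) (use w0 in simp)
  show "(w has_sum (\<Sum>n. w n)) UNIV"
    by (rule sums_nonneg_imp_has_sum[OF summable_sums[OF sw]]) (use w0 in simp)
qed

lemma Cw_pos: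
  fixes w :: "nat \<Rightarrow> real"
  assumes w0: "\<And>n. w n \<ge> 0" and sm: "summable (\<lambda>n. real n * w n)" and nz: "\<exists>n. w n \<noteq> 0"
  shows "(\<Sum>m. (real m + 1) * w m) > 0"
proof -
  obtain i where i: "w i \<noteq> 0" using nz by blast
  have sw: "summable w" by (rule seq_facts(1)[OF w0 sm])
  have s1: "summable (\<lambda>n. (real n + 1) * w n)" using summable_add[OF sm sw] by (simp add: distrib_right)
  show ?thesis
    by (rule suminf_pos2[OF s1, of i]) (use w0 i in \<open>auto simp: less_le\<close>)
qed

definition cI :: "nat set \<Rightarrow> (nat \<Rightarrow> nat) \<Rightarrow> nat \<Rightarrow> nat \<Rightarrow> real" where
  "cI I x k v = (if k \<in> I \<longrightarrow> v = x k then 1 else 0)"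

lemma cI_nonneg: "cI I x k v \<ge> 0" and cI_le1: "cI I x k v \<le> 1"
  unfolding cI_def by auto

lemma cI_empty: "cI {} x = (\<lambda>_ _. 1)"
  unfolding cI_def by (intro ext) simp

definition AQ :: "real \<Rightarrow> nat \<Rightarrow> (nat \<Rightarrow> real) \<Rightarrow> nat set \<Rightarrow> (nat \<Rightarrow> nat) \<Rightarrow> real" where
  "AQ \<sigma> K w I x = infsum (\<lambda>a. w a * cI I x 0 a * bk (sk \<sigma>) (cI I x) (\<lambda>b. real b + 1) K a) UNIV"

lemma bk_harm_le:
  assumes s: "\<sigma> > 0"
  shows "bk (sk \<sigma>) (cI I x) (\<lambda>b. real b + 1) K a \<le> (2 + \<sigma>) ^ K * (real a + 1)"
proof -
  have "bk (sk \<sigma>) (cI I x) (\<lambda>b. real b + 1) K a \<le> bk (sk \<sigma>) (\<lambda>_ _. 1) (\<lambda>b. real b + 1) K a"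
    by (rule bk_mono) (use s in \<open>auto simp: sk_nonneg cI_nonneg cI_le1\<close>)
  then show ?thesis by (simp add: harmonic)
qed

lemma AQ_has_sum:
  assumes s: "\<sigma> > 0" and w0: "\<And>n. w n \<ge> 0" and sm: "summable (\<lambda>n. real n * w n)"
  shows "((\<lambda>a. w a * cI I x 0 a * bk (sk \<sigma>) (cI I x) (\<lambda>b. real b + 1) K a) has_sum AQ \<sigma> K w I x) UNIV"
proof -
  have "(\<lambda>n. (real n + 1) * w n) summable_on UNIV"
    using seq_facts(2)[OF w0 sm] by (rule has_sum_imp_summable)
  then have f: "(\<lambda>a. (2 + \<sigma>) ^ K * ((real a + 1) * w a)) summable_on UNIV"
    by (rule summable_on_cmult_right)
  have "(\<lambda>a. w a * cI I x 0 a * bk (sk \<sigma>) (cI I x) (\<lambda>b. real b + 1) K a) summable_on UNIV"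
  proof (rule summable_on_comparison_test[OF f])
    fix a :: nat
    have b0: "0 \<le> bk (sk \<sigma>) (cI I x) (\<lambda>b. real b + 1) K a"
      by (rule bk_nonneg) (use s in \<open>auto simp: sk_nonneg cI_nonneg\<close>)
    show "0 \<le> w a * cI I x 0 a * bk (sk \<sigma>) (cI I x) (\<lambda>b. real b + 1) K a"
      using w0[of a] b0 cI_nonneg[of I x 0 a] by simp
    have "w a * cI I x 0 a * bk (sk \<sigma>) (cI I x) (\<lambda>b. real b + 1) K a \<le> w a * 1 * ((2 + \<sigma>) ^ K * (real a + 1))"
      by (intro mult_mono bk_harm_le s) (use w0[of a] b0 cI_nonneg[of I x 0 a] cI_le1[of I x 0 a] in auto)
    then show "w a * cI I x 0 a * bk (sk \<sigma>) (cI I x) (\<lambda>b. real b + 1) K a \<le> (2 + \<sigma>) ^ K * ((real a + 1) * w a)"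
      by (simp add: algebra_simps)
  qed
  then show ?thesis unfolding AQ_def by (rule has_sum_infsum)
qed

lemma AQ_empty:
  assumes w0: "\<And>n. w n \<ge> 0" and sm: "summable (\<lambda>n. real n * w n)"
  shows "AQ \<sigma> K w {} x = (2 + \<sigma>) ^ K * (\<Sum>m. (real m + 1) * w m)"
proof -
  have "((\<lambda>a. (2 + \<sigma>) ^ K * ((real a + 1) * w a)) has_sum (2 + \<sigma>) ^ K * (\<Sum>m. (real m + 1) * w m)) UNIV"
    by (rule has_sum_cmult_right[OF seq_facts(2)[OF w0 sm]])
  then show ?thesis unfolding AQ_def cI_empty harmonic
    by (intro infsumI) (simp add: algebra_simps)
qed

lemma constr_prod:
  assumes "I \<subseteq> {..K}"
  shows "cI I x 0 (g ! 0) * (\<Prod>k\<in>{1..K}. cI I x k (g ! k)) = (if \<forall>k\<in>I. g ! k = x k then 1 else 0)"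
proof -
  have "cI I x 0 (g ! 0) * (\<Prod>k\<in>{1..K}. cI I x k (g ! k)) = (\<Prod>k\<in>{0..K}. cI I x k (g ! k))"
    by (simp add: prod.atLeast_Suc_atMost)
  also have "\<dots> = (\<Prod>k\<in>{0..K}. if k \<in> I \<longrightarrow> g ! k = x k then 1 else 0)"
    unfolding cI_def ..
  also have "\<dots> = (if \<forall>k\<in>{0..K}. k \<in> I \<longrightarrow> g ! k = x k then 1 else 0)"
    by (rule prod_if01) simp
  also have "(\<forall>k\<in>{0..K}. k \<in> I \<longrightarrow> g ! k = x k) \<longleftrightarrow> (\<forall>k\<in>I. g ! k = x k)"
    using assms by auto
  finally show ?thesis .
qed

lemma aux_mc:
  fixes e w C X D c :: real
  assumes "e > 0" "D > 0" "C > 0"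
  shows "e * w / C * c * (X / (e * D)) = w * c * X / (D * C)"
  using assms by (simp add: field_simps)

lemma mc_eq:
  assumes s: "\<sigma> > 0" and w0: "\<And>n. w n \<ge> 0" and sm: "summable (\<lambda>n. real n * w n)" and nz: "\<exists>n. w n \<noteq> 0"
    and I: "I \<subseteq> {..K}"
  shows "mc_cyl_prob (init_law w) (trans_P \<sigma>) K I x = AQ \<sigma> K w I x / ((2 + \<sigma>) ^ K * (\<Sum>m. (real m + 1) * w m))"
proof -
  define Cw where "Cw = (\<Sum>m. (real m + 1) * w m)"
  have Cw: "Cw > 0" unfolding Cw_def by (rule Cw_pos[OF w0 sm nz])
  define X where "X = AQ \<sigma> K w I x / ((2 + \<sigma>) ^ K * Cw)"
  have mu: "init_law w a = (real a + 1) * w a / Cw" for a unfolding init_law_def Cw_def ..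
  have mu0: "init_law w a \<ge> 0" for a unfolding mu using Cw w0[of a] by simp
  have outer: "((\<lambda>a. (init_law w a * cI I x 0 a) * bk (trans_P \<sigma>) (cI I x) (\<lambda>_. 1) K a) has_sum X) UNIV"
  proof -
    have "((\<lambda>a. w a * cI I x 0 a * bk (sk \<sigma>) (cI I x) (\<lambda>b. real b + 1) K a / ((2 + \<sigma>) ^ K * Cw)) has_sum X) UNIV"
      unfolding X_def by (rule has_sum_divide_const[OF AQ_has_sum[OF s w0 sm]])
    then show ?thesis
    proof (rule has_sum_cong[THEN iffD1, rotated])
      fix a
      show "w a * cI I x 0 a * bk (sk \<sigma>) (cI I x) (\<lambda>b. real b + 1) K a / ((2 + \<sigma>) ^ K * Cw)
          = init_law w a * cI I x 0 a * bk (trans_P \<sigma>) (cI I x) (\<lambda>_. 1) K a"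
        unfolding mu bk_P[OF s] using s Cw by (subst aux_mc) auto
    qed
  qed
  have lists: "((\<lambda>g. (init_law w (g ! 0) * cI I x 0 (g ! 0)) * Gf (trans_P \<sigma>) (cI I x) (\<lambda>_. 1) K g) has_sum X) {g. length g = Suc K}"
    by (rule total_has_sum[OF trans_P_tri[OF s] trans_P_nonneg[OF s] cI_nonneg _ _ outer])
       (use mu0 cI_nonneg in \<open>auto intro: mult_nonneg_nonneg\<close>)
  have e: "(init_law w (g ! 0) * cI I x 0 (g ! 0)) * Gf (trans_P \<sigma>) (cI I x) (\<lambda>_. 1) K g
     = init_law w (g ! 0) * (cI I x 0 (g ! 0) * (\<Prod>k\<in>{1..K}. cI I x k (g ! k))) * (\<Prod>i<K. trans_P \<sigma> (g ! i) (g ! Suc i))" for g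
    unfolding Gf_def by (simp add: algebra_simps)
  have "((\<lambda>z. init_law w (z ! 0) * (\<Prod>i<K. trans_P \<sigma> (z ! i) (z ! Suc i))) has_sum X)
      {z. length z = Suc K \<and> (\<forall>k\<in>I. z ! k = x k)}"
  proof (rule has_sum_cong_neutral[THEN iffD1, OF _ _ _ lists])
    fix g assume g: "g \<in> {g. length g = Suc K} - {z. length z = Suc K \<and> (\<forall>k\<in>I. z ! k = x k)}"
    then have "cI I x 0 (g ! 0) * (\<Prod>k\<in>{1..K}. cI I x k (g ! k)) = 0" using constr_prod[OF I, of x g] by auto
    then show "(init_law w (g ! 0) * cI I x 0 (g ! 0)) * Gf (trans_P \<sigma>) (cI I x) (\<lambda>_. 1) K g = 0"
      unfolding e by simp
  next
    fix g assume g: "g \<in> {g. length g = Suc K} \<inter> {z. length z = Suc K \<and> (\<forall>k\<in>I. z ! k = x k)}"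
    then have "cI I x 0 (g ! 0) * (\<Prod>k\<in>{1..K}. cI I x k (g ! k)) = 1" using constr_prod[OF I, of x g] by auto
    then show "(init_law w (g ! 0) * cI I x 0 (g ! 0)) * Gf (trans_P \<sigma>) (cI I x) (\<lambda>_. 1) K g
        = init_law w (g ! 0) * (\<Prod>i<K. trans_P \<sigma> (g ! i) (g ! Suc i))"
      unfolding e by simp
  qed auto
  then show ?thesis unfolding mc_cyl_prob_def X_def Cw_def by (rule infsumI)
qed

definition cFL :: "nat \<Rightarrow> nat set \<Rightarrow> (nat \<Rightarrow> nat) \<Rightarrow> nat set \<Rightarrow> (nat \<Rightarrow> nat) \<Rightarrow> nat \<Rightarrow> nat \<Rightarrow> real" where
  "cFL L I x J y k v = (if (k \<in> I \<longrightarrow> v = x k) \<and> (k \<le> L \<and> L - k \<in> J \<longrightarrow> v = y (L - k)) then 1 else 0)"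

definition EE :: "nat \<Rightarrow> nat set \<Rightarrow> (nat \<Rightarrow> nat) \<Rightarrow> nat set \<Rightarrow> (nat \<Rightarrow> nat) \<Rightarrow> nat list set" where
  "EE L I x J y = {g. (\<forall>k\<in>I. gamma_proc L g k = x k) \<and> (\<forall>k\<in>J. gamma_rev_proc L g k = y k)}"

definition Num :: "real \<Rightarrow> (nat \<Rightarrow> real) \<Rightarrow> (nat \<Rightarrow> real) \<Rightarrow> nat \<Rightarrow> nat set \<Rightarrow> (nat \<Rightarrow> nat) \<Rightarrow> nat set \<Rightarrow> (nat \<Rightarrow> nat) \<Rightarrow> real" where
  "Num \<sigma> \<alpha> \<beta> L I x J y = infsum (\<lambda>g. \<alpha> (g ! 0) * \<beta> (g ! L) * path_weight \<sigma> L g) (motzkin_paths L \<inter> EE L I x J y)"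

lemma cFL_nonneg: "cFL L I x J y k v \<ge> 0" and cFL_le1: "cFL L I x J y k v \<le> 1"
  unfolding cFL_def by auto

lemma EE_iff:
  assumes I: "I \<subseteq> {..K}" and J: "J \<subseteq> {..K}" and KL: "K \<le> L"
  shows "g \<in> EE L I x J y \<longleftrightarrow> (\<forall>k\<in>{0..L}. (k \<in> I \<longrightarrow> g ! k = x k) \<and> (k \<le> L \<and> L - k \<in> J \<longrightarrow> g ! k = y (L - k)))"
proof
  assume g: "g \<in> EE L I x J y"
  show "\<forall>k\<in>{0..L}. (k \<in> I \<longrightarrow> g ! k = x k) \<and> (k \<le> L \<and> L - k \<in> J \<longrightarrow> g ! k = y (L - k))"
  proof (intro ballI conjI impI)
    fix k assume k: "k \<in> {0..L}"
    { assume "k \<in> I" then show "g ! k = x k" using g k unfolding EE_def gamma_proc_def by auto }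
    { assume kJ: "k \<le> L \<and> L - k \<in> J"
      then have "gamma_rev_proc L g (L - k) = y (L - k)" using g unfolding EE_def by auto
      then show "g ! k = y (L - k)" using kJ unfolding gamma_rev_proc_def by auto }
  qed
next
  assume h: "\<forall>k\<in>{0..L}. (k \<in> I \<longrightarrow> g ! k = x k) \<and> (k \<le> L \<and> L - k \<in> J \<longrightarrow> g ! k = y (L - k))"
  have "gamma_proc L g k = x k" if "k \<in> I" for k
    using that I KL h unfolding gamma_proc_def by force
  moreover have "gamma_rev_proc L g k = y k" if "k \<in> J" for k
  proof -
    have kL: "k \<le> L" using that J KL by auto
    then have "L - (L - k) = k" by simp
    then have "g ! (L - k) = y k" using h[rule_format, of "L - k"] that kL by auto
    then show ?thesis using kL unfolding gamma_rev_proc_def by simp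
  qed
  ultimately show "g \<in> EE L I x J y" unfolding EE_def by auto
qed

lemma cF_prod:
  assumes I: "I \<subseteq> {..K}" and J: "J \<subseteq> {..K}" and KL: "K \<le> L"
  shows "cFL L I x J y 0 (g ! 0) * (\<Prod>k\<in>{1..L}. cFL L I x J y k (g ! k)) = (if g \<in> EE L I x J y then 1 else 0)"
proof -
  have "cFL L I x J y 0 (g ! 0) * (\<Prod>k\<in>{1..L}. cFL L I x J y k (g ! k)) = (\<Prod>k\<in>{0..L}. cFL L I x J y k (g ! k))"
    by (simp add: prod.atLeast_Suc_atMost)
  also have "\<dots> = (\<Prod>k\<in>{0..L}. if (k \<in> I \<longrightarrow> g ! k = x k) \<and> (k \<le> L \<and> L - k \<in> J \<longrightarrow> g ! k = y (L - k)) then 1 else 0)"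
    unfolding cFL_def ..
  also have "\<dots> = (if \<forall>k\<in>{0..L}. (k \<in> I \<longrightarrow> g ! k = x k) \<and> (k \<le> L \<and> L - k \<in> J \<longrightarrow> g ! k = y (L - k)) then 1 else 0)"
    by (rule prod_if01) simp
  finally show ?thesis using EE_iff[OF I J KL] by simp
qed

lemma sk_prod:
  assumes len: "length g = Suc L"
  shows "(\<Prod>k<L. sk \<sigma> (g ! k) (g ! Suc k)) = (if g \<in> motzkin_paths L then path_weight \<sigma> L g else 0)"
proof (cases "g \<in> motzkin_paths L")
  case True
  then have m: "\<bar>int (g ! Suc k) - int (g ! k)\<bar> \<le> 1" if "k < L" for k
    using that unfolding motzkin_paths_def by auto
  have "(\<Prod>k<L. sk \<sigma> (g ! k) (g ! Suc k)) = (\<Prod>k<L. if g ! Suc k = g ! k then \<sigma> else 1)"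
  proof (rule prod.cong[OF refl])
    fix k assume "k \<in> {..<L}"
    then have "\<bar>int (g ! Suc k) - int (g ! k)\<bar> \<le> 1" using m by auto
    then show "sk \<sigma> (g ! k) (g ! Suc k) = (if g ! Suc k = g ! k then \<sigma> else 1)"
      unfolding sk_def by auto
  qed
  also have "\<dots> = (\<Prod>k\<in>{k\<in>{..<L}. g ! Suc k = g ! k}. \<sigma>)"
    by (rule prod.inter_filter[symmetric]) simp
  also have "\<dots> = \<sigma> ^ card {k. k < L \<and> g ! Suc k = g ! k}"
    by (simp add: conj_commute)
  finally show ?thesis using True unfolding path_weight_def by simp
next
  case False
  then obtain k where k: "k < L" "\<not> \<bar>int (g ! Suc k) - int (g ! k)\<bar> \<le> 1"
    using len unfolding motzkin_paths_def by auto
  then have "sk \<sigma> (g ! k) (g ! Suc k) = 0" unfolding sk_def by auto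
  then have "(\<Prod>k<L. sk \<sigma> (g ! k) (g ! Suc k)) = 0" using k(1) by (intro prod_zero) auto
  then show ?thesis using False by simp
qed

lemma Num_eq:
  assumes s: "\<sigma> > 0" and a0: "\<And>n. \<alpha> n \<ge> 0" and b0: "\<And>n. \<beta> n \<ge> 0"
    and I: "I \<subseteq> {..K}" and J: "J \<subseteq> {..K}" and KL: "K \<le> L"
    and outer: "((\<lambda>a. (\<alpha> a * cFL L I x J y 0 a) * bk (sk \<sigma>) (cFL L I x J y) \<beta> L a) has_sum X) UNIV"
  shows "Num \<sigma> \<alpha> \<beta> L I x J y = X"
proof -
  let ?c = "cFL L I x J y"
  have lists: "((\<lambda>g. (\<alpha> (g ! 0) * ?c 0 (g ! 0)) * Gf (sk \<sigma>) ?c \<beta> L g) has_sum X) {g. length g = Suc L}"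
    by (rule total_has_sum[OF sk_tri _ cFL_nonneg _ _ outer])
       (use s a0 b0 cFL_nonneg in \<open>auto simp: sk_nonneg intro: mult_nonneg_nonneg\<close>)
  have e: "(\<alpha> (g ! 0) * ?c 0 (g ! 0)) * Gf (sk \<sigma>) ?c \<beta> L g
     = \<alpha> (g ! 0) * (?c 0 (g ! 0) * (\<Prod>k\<in>{1..L}. ?c k (g ! k))) * (\<Prod>k<L. sk \<sigma> (g ! k) (g ! Suc k)) * \<beta> (g ! L)" for g
    unfolding Gf_def by (simp add: algebra_simps)
  have "((\<lambda>g. \<alpha> (g ! 0) * \<beta> (g ! L) * path_weight \<sigma> L g) has_sum X) (motzkin_paths L \<inter> EE L I x J y)"
  proof (rule has_sum_cong_neutral[THEN iffD1, OF _ _ _ lists])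
    fix g assume g: "g \<in> {g. length g = Suc L} - motzkin_paths L \<inter> EE L I x J y"
    then show "(\<alpha> (g ! 0) * ?c 0 (g ! 0)) * Gf (sk \<sigma>) ?c \<beta> L g = 0"
      unfolding e cF_prod[OF I J KL] using sk_prod[of g L \<sigma>] by auto
  next
    fix g assume g: "g \<in> {g. length g = Suc L} \<inter> (motzkin_paths L \<inter> EE L I x J y)"
    then show "(\<alpha> (g ! 0) * ?c 0 (g ! 0)) * Gf (sk \<sigma>) ?c \<beta> L g = \<alpha> (g ! 0) * \<beta> (g ! L) * path_weight \<sigma> L g"
      unfolding e cF_prod[OF I J KL] using sk_prod[of g L \<sigma>] by auto
  qed (auto simp: motzkin_paths_def)
  then show ?thesis unfolding Num_def by (rule infsumI)
qed

lemma beta_bounded: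
  assumes b0: "\<And>n. \<beta> n \<ge> 0" and sm: "summable (\<lambda>n. real n * \<beta> n)"
  obtains B where "B > 0" "\<And>n. \<beta> n \<le> B"
proof -
  have "convergent \<beta>" using summable_LIMSEQ_zero[OF seq_facts(1)[OF b0 sm]] by (auto simp: convergent_def)
  then have "Bseq \<beta>" by (rule convergent_imp_Bseq)
  then obtain B where B: "B > 0" "\<And>n. norm (\<beta> n) \<le> B" by (auto elim: BseqE)
  show ?thesis
  proof (rule that[OF B(1)])
    fix n show "\<beta> n \<le> B" using B(2)[of n] by (simp add: abs_le_iff)
  qed
qed

lemma outer_summable:
  assumes s: "\<sigma> > 0" and a0: "\<And>n. \<alpha> n \<ge> 0" and b0: "\<And>n. \<beta> n \<ge> 0"
    and sa: "summable (\<lambda>n. real n * \<alpha> n)" and sb: "summable (\<lambda>n. real n * \<beta> n)"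
    and c0: "\<And>k b. 0 \<le> c k b" and c1: "\<And>k b. c k b \<le> 1"
  shows "(\<lambda>a. (\<alpha> a * c 0 a) * bk (sk \<sigma>) c \<beta> L a) summable_on UNIV"
proof -
  obtain B where B: "B > 0" "\<And>n. \<beta> n \<le> B" using beta_bounded[OF b0 sb] by blast
  have "\<alpha> summable_on UNIV" using seq_facts(3)[OF a0 sa] by (rule has_sum_imp_summable)
  then have f: "(\<lambda>a. \<alpha> a * ((2 + \<sigma>) ^ L * B)) summable_on UNIV" by (rule summable_on_cmult_left)
  show ?thesis
  proof (rule summable_on_comparison_test[OF f])
    fix a
    have bk0: "0 \<le> bk (sk \<sigma>) c \<beta> L a" by (rule bk_nonneg) (use s c0 b0 in \<open>auto simp: sk_nonneg\<close>)
    have bkB: "bk (sk \<sigma>) c \<beta> L a \<le> (2 + \<sigma>) ^ L * B"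
      by (rule bk_bound) (use s c0 c1 b0 B in \<open>auto simp: sk_nonneg sk_rowsum\<close>)
    show "0 \<le> (\<alpha> a * c 0 a) * bk (sk \<sigma>) c \<beta> L a" using a0[of a] c0[of 0 a] bk0 by simp
    have "(\<alpha> a * c 0 a) * bk (sk \<sigma>) c \<beta> L a \<le> (\<alpha> a * 1) * ((2 + \<sigma>) ^ L * B)"
    proof (rule mult_mono[OF _ bkB _ bk0])
      show "\<alpha> a * c 0 a \<le> \<alpha> a * 1" using a0[of a] c1[of 0 a] by (rule mult_left_mono[rotated])
    qed (use a0[of a] in simp)
    then show "(\<alpha> a * c 0 a) * bk (sk \<sigma>) c \<beta> L a \<le> \<alpha> a * ((2 + \<sigma>) ^ L * B)" by simp
  qed
qed

definition hJ :: "real \<Rightarrow> nat \<Rightarrow> (nat \<Rightarrow> real) \<Rightarrow> nat set \<Rightarrow> (nat \<Rightarrow> nat) \<Rightarrow> nat \<Rightarrow> real" where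
  "hJ \<sigma> K \<beta> J y b = cI J y K b * bk (sk \<sigma>) (\<lambda>k. cI J y (K - k)) \<beta> K b"

lemma decomp:
  assumes I: "I \<subseteq> {..K}" and J: "J \<subseteq> {..K}" and L: "L = K + Suc M + K"
  shows "bk (sk \<sigma>) (cFL L I x J y) \<beta> L a
       = bk (sk \<sigma>) (cI I x) (\<lambda>b. bk (sk \<sigma>) (\<lambda>_ _. 1) (hJ \<sigma> K \<beta> J y) (Suc M) b) K a"
    and "cFL L I x J y 0 = cI I x 0"
proof -
  let ?c = "cFL L I x J y"
  have nI: "k \<notin> I" if "k > K" for k using that I by auto
  have nJ: "k \<notin> J" if "k > K" for k using that J by auto
  have suf: "bk (sk \<sigma>) (\<lambda>k. ?c (k + Suc M + K)) \<beta> K b = bk (sk \<sigma>) (\<lambda>k. cI J y (K - k)) \<beta> K b" for b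
  proof (rule bk_cong)
    fix k v assume k: "k \<in> {1..K}"
    have "L - (k + Suc M + K) = K - k" using L k by auto
    moreover have "k + Suc M + K \<le> L" using L k by auto
    ultimately show "?c (k + Suc M + K) v = cI J y (K - k) v"
      unfolding cFL_def cI_def using nI[of "k + Suc M + K"] by auto
  qed
  have cmid: "?c (Suc M + K) = cI J y K"
  proof (intro ext)
    fix v
    have "L - (Suc M + K) = K" using L by auto
    then show "?c (Suc M + K) v = cI J y K v"
      unfolding cFL_def cI_def using nI[of "Suc M + K"] L by auto
  qed
  have mid: "bk (sk \<sigma>) (\<lambda>k. ?c (k + K)) w (Suc M) b = bk (sk \<sigma>) (\<lambda>_ _. 1) (\<lambda>b. cI J y K b * w b) (Suc M) b" for w b
  proof -
    have "bk (sk \<sigma>) (\<lambda>k. ?c (k + K)) w (Suc M) b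
        = bk (sk \<sigma>) ((\<lambda>k. ?c (k + K))(Suc M := (\<lambda>_. 1))) (\<lambda>b. ?c (Suc M + K) b * w b) (Suc M) b"
      by (rule bk_last)
    also have "\<dots> = bk (sk \<sigma>) (\<lambda>_ _. 1) (\<lambda>b. ?c (Suc M + K) b * w b) (Suc M) b"
    proof (rule bk_cong)
      fix k v assume k: "k \<in> {1..Suc M}"
      show "((\<lambda>k. ?c (k + K))(Suc M := (\<lambda>_. 1))) k v = 1"
      proof (cases "k = Suc M")
        case False
        then have "L - (k + K) > K" using k L by auto
        then show ?thesis using False nI[of "k + K"] nJ[of "L - (k + K)"] k unfolding cFL_def by auto
      qed simp
    qed
    finally show ?thesis unfolding cmid .
  qed
  have "bk (sk \<sigma>) ?c \<beta> L a = bk (sk \<sigma>) ?c \<beta> (K + (Suc M + K)) a" using L by (simp add: add.assoc)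
  also have "\<dots> = bk (sk \<sigma>) ?c (bk (sk \<sigma>) (\<lambda>k. ?c (k + K)) \<beta> (Suc M + K)) K a" by (rule bk_comp)
  also have "\<dots> = bk (sk \<sigma>) (cI I x) (bk (sk \<sigma>) (\<lambda>k. ?c (k + K)) \<beta> (Suc M + K)) K a"
  proof (rule bk_cong)
    fix k v assume k: "k \<in> {1..K}"
    then have "L - k > K" using L by auto
    then show "?c k v = cI I x k v" using nJ[of "L - k"] unfolding cFL_def cI_def by auto
  qed
  also have "bk (sk \<sigma>) (\<lambda>k. ?c (k + K)) \<beta> (Suc M + K) = (\<lambda>b. bk (sk \<sigma>) (\<lambda>_ _. 1) (hJ \<sigma> K \<beta> J y) (Suc M) b)"
  proof (rule ext)
    fix b
    have "bk (sk \<sigma>) (\<lambda>k. ?c (k + K)) \<beta> (Suc M + K) b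
       = bk (sk \<sigma>) (\<lambda>k. ?c (k + K)) (bk (sk \<sigma>) (\<lambda>k. ?c (k + Suc M + K)) \<beta> K) (Suc M) b"
      by (rule bk_comp)
    also have "\<dots> = bk (sk \<sigma>) (\<lambda>k. ?c (k + K)) (bk (sk \<sigma>) (\<lambda>k. cI J y (K - k)) \<beta> K) (Suc M) b"
      using suf by presburger
    also have "\<dots> = bk (sk \<sigma>) (\<lambda>_ _. 1) (hJ \<sigma> K \<beta> J y) (Suc M) b"
      unfolding mid hJ_def ..
    finally show "bk (sk \<sigma>) (\<lambda>k. ?c (k + K)) \<beta> (Suc M + K) b = bk (sk \<sigma>) (\<lambda>_ _. 1) (hJ \<sigma> K \<beta> J y) (Suc M) b" .
  qed
  finally show "bk (sk \<sigma>) ?c \<beta> L a = bk (sk \<sigma>) (cI I x) (\<lambda>b. bk (sk \<sigma>) (\<lambda>_ _. 1) (hJ \<sigma> K \<beta> J y) (Suc M) b) K a" .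
  show "?c 0 = cI I x 0"
  proof (rule ext)
    fix v
    have "L - 0 > K" using L by auto
    then show "?c 0 v = cI I x 0 v" using nJ[of "L - 0"] unfolding cFL_def cI_def by auto
  qed
qed

lemma tannery_infsum:
  fixes f :: "nat \<Rightarrow> 'a \<Rightarrow> real" and g h :: "'a \<Rightarrow> real"
  assumes lim: "\<And>x. x \<in> A \<Longrightarrow> (\<lambda>n. f n x) \<longlonglongrightarrow> g x"
    and bnd: "eventually (\<lambda>n. \<forall>x\<in>A. \<bar>f n x\<bar> \<le> h x) sequentially"
    and hs: "h summable_on A"
  shows "(\<lambda>n. infsum (f n) A) \<longlonglongrightarrow> infsum g A"
proof -
  obtain N where N: "\<And>n x. n \<ge> N \<Longrightarrow> x \<in> A \<Longrightarrow> \<bar>f n x\<bar> \<le> h x"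
    using bnd by (auto simp: eventually_sequentially)
  have "(\<lambda>x. norm (h x)) summable_on A" using hs summable_on_iff_abs_summable_on_real by blast
  then have "Infinite_Set_Sum.abs_summable_on h A" using abs_summable_equivalent by blast
  then have hint: "integrable (count_space A) h" by (simp only: abs_summable_on_def)
  have fint: "integrable (count_space A) (f (n + N))" for n
  proof (rule Bochner_Integration.integrable_bound[OF hint])
    show "AE x in count_space A. norm (f (n + N) x) \<le> norm (h x)"
      unfolding AE_count_space using N[of "n + N"] by (auto intro: order_trans[OF _ abs_ge_self])
  qed auto
  have gbd: "\<bar>g x\<bar> \<le> h x" if "x \<in> A" for x
  proof -
    have "(\<lambda>n. \<bar>f (n + N) x\<bar>) \<longlonglongrightarrow> \<bar>g x\<bar>"
      using LIMSEQ_ignore_initial_segment[OF lim[OF that], of N] by (intro tendsto_rabs)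
    moreover have "\<exists>N'. \<forall>n\<ge>N'. \<bar>f (n + N) x\<bar> \<le> h x" using N[OF _ that] by auto
    ultimately show ?thesis by (rule LIMSEQ_le_const2)
  qed
  have gint: "integrable (count_space A) g"
  proof (rule Bochner_Integration.integrable_bound[OF hint])
    show "AE x in count_space A. norm (g x) \<le> norm (h x)"
      unfolding AE_count_space using gbd by (auto intro: order_trans[OF _ abs_ge_self])
  qed auto
  have "(\<lambda>n. integral\<^sup>L (count_space A) (f (n + N))) \<longlonglongrightarrow> integral\<^sup>L (count_space A) g"
    by (rule integral_dominated_convergence[where w=h])
       (auto simp: AE_count_space hint intro!: N LIMSEQ_ignore_initial_segment lim)
  moreover have "integral\<^sup>L (count_space A) (f (n + N)) = infsum (f (n + N)) A" for n
  proof -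
    have "Infinite_Set_Sum.abs_summable_on (f (n + N)) A" using fint[of n] by (simp only: abs_summable_on_def)
    then have "infsetsum (f (n + N)) A = infsum (f (n + N)) A" by (rule infsetsum_infsum)
    then show ?thesis by (simp only: infsetsum_def)
  qed
  moreover have "integral\<^sup>L (count_space A) g = infsum g A"
  proof -
    have "Infinite_Set_Sum.abs_summable_on g A" using gint by (simp only: abs_summable_on_def)
    then have "infsetsum g A = infsum g A" by (rule infsetsum_infsum)
    then show ?thesis by (simp only: infsetsum_def)
  qed
  ultimately have "(\<lambda>n. infsum (f (n + N)) A) \<longlonglongrightarrow> infsum g A" by simp
  then show ?thesis by (rule LIMSEQ_offset)
qed

lemma num_lim:
  assumes s: "\<sigma> > 0" and a0: "\<And>n. \<alpha> n \<ge> 0" and b0: "\<And>n. \<beta> n \<ge> 0"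
    and sa: "summable (\<lambda>n. real n * \<alpha> n)" and sb: "summable (\<lambda>n. real n * \<beta> n)"
    and I: "I \<subseteq> {..K}" and J: "J \<subseteq> {..K}"
  shows "(\<lambda>M. Num \<sigma> \<alpha> \<beta> (K + Suc M + K) I x J y / Wk \<sigma> (Suc M) 0 0) \<longlonglongrightarrow> AQ \<sigma> K \<alpha> I x * AQ \<sigma> K \<beta> J y"
proof -
  define H where "H = AQ \<sigma> K \<beta> J y"
  define h where "h = hJ \<sigma> K \<beta> J y"
  have sk0: "\<And>a b. sk \<sigma> a b \<ge> 0" using s by (simp add: sk_nonneg)
  have h0: "h b \<ge> 0" for b
  proof -
    have "0 \<le> bk (sk \<sigma>) (\<lambda>k. cI J y (K - k)) \<beta> K b" by (rule bk_nonneg[OF sk0]) (auto simp: cI_nonneg b0)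
    then show ?thesis unfolding h_def hJ_def using cI_nonneg[of J y K b] by simp
  qed
  have hH: "((\<lambda>b. (real b + 1) * h b) has_sum H) UNIV"
  proof -
    have "((\<lambda>a. (real a + 1) * cI J y K a * bk (sk \<sigma>) (\<lambda>k. cI J y (K - k)) \<beta> K a) has_sum H) UNIV"
      unfolding H_def by (rule transpose_has_sum[OF sk_tri sk0 sk_sym cI_nonneg b0 _ AQ_has_sum[OF s b0 sb]]) simp
    then show ?thesis unfolding h_def hJ_def by (rule has_sum_cong[THEN iffD1, rotated]) (simp only: mult.assoc)
  qed
  have H0: "H \<ge> 0"
  proof (rule has_sum_nonneg[OF hH])
    fix b :: nat show "0 \<le> (real b + 1) * h b" using h0[of b] by simp
  qed
  define w where "w M = Wk \<sigma> (Suc M) 0 0" for M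
  have w0: "w M > 0" for M unfolding w_def using Wk00_pos[OF s] .
  define Mid where "Mid M b = bk (sk \<sigma>) (\<lambda>_ _. 1) h (Suc M) b" for M b
  have Mid_hs: "((\<lambda>b'. Wk \<sigma> (Suc M) b b' / w M * h b') has_sum (Mid M b / w M)) UNIV" for M b
  proof -
    have "((\<lambda>b'. Wk \<sigma> (Suc M) b b' * h b' / w M) has_sum (Mid M b / w M)) UNIV"
      unfolding Mid_def by (rule has_sum_divide_const[OF Wk_has_sum])
    then show ?thesis by simp
  qed
  obtain M0 where M0: "\<And>M a b. M \<ge> M0 \<Longrightarrow> Wk \<sigma> M a b \<le> 2 * ((real a + 1) * (real b + 1)) * Wk \<sigma> M 0 0"
    using Wk_bound[OF s] by blast
  have ptb: "Wk \<sigma> (Suc M) b b' / w M * h b' \<le> 2 * (real b + 1) * ((real b' + 1) * h b')" if "M \<ge> M0" for M b b'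
  proof -
    have "Wk \<sigma> (Suc M) b b' \<le> 2 * ((real b + 1) * (real b' + 1)) * w M" unfolding w_def using that by (intro M0) auto
    then have "Wk \<sigma> (Suc M) b b' / w M \<le> 2 * ((real b + 1) * (real b' + 1))" using w0[of M] by (simp add: divide_le_eq)
    then have "Wk \<sigma> (Suc M) b b' / w M * h b' \<le> 2 * ((real b + 1) * (real b' + 1)) * h b'" using h0[of b'] by (rule mult_right_mono)
    then show ?thesis by (simp add: algebra_simps)
  qed
  have pt0: "Wk \<sigma> (Suc M) b b' / w M * h b' \<ge> 0" for M b b'
    using Wk_nonneg[of \<sigma> "Suc M" b b'] w0[of M] h0[of b'] s by simp
  have Mid_bd: "Mid M b / w M \<le> 2 * (real b + 1) * H" if "M \<ge> M0" for M b
    by (rule has_sum_mono[OF Mid_hs has_sum_cmult_right[OF hH]]) (use ptb that in auto)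
  have Mid0: "Mid M b / w M \<ge> 0" for M b
    by (rule has_sum_nonneg[OF Mid_hs]) (use pt0 in auto)
  have inner: "(\<lambda>M. Mid M b / w M) \<longlonglongrightarrow> (real b + 1) * H" for b
  proof -
    have eq: "Mid M b / w M = infsum (\<lambda>b'. Wk \<sigma> (Suc M) b b' / w M * h b') UNIV" for M
      using Mid_hs[of M b] by (simp add: infsumI)
    have lim: "(\<lambda>M. infsum (\<lambda>b'. Wk \<sigma> (Suc M) b b' / w M * h b') UNIV) \<longlonglongrightarrow> infsum (\<lambda>b'. (real b + 1) * (real b' + 1) * h b') UNIV"
    proof (rule tannery_infsum)
      fix b' :: nat
      have "(\<lambda>M. Wk \<sigma> (Suc M) b b' / w M) \<longlonglongrightarrow> (real b + 1) * (real b' + 1)"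
        unfolding w_def by (rule LIMSEQ_Suc[OF Wk_ratio_lim[OF s]])
      then show "(\<lambda>M. Wk \<sigma> (Suc M) b b' / w M * h b') \<longlonglongrightarrow> (real b + 1) * (real b' + 1) * h b'"
        by (intro tendsto_mult tendsto_const)
    next
      show "\<forall>\<^sub>F M in sequentially. \<forall>b'\<in>UNIV. \<bar>Wk \<sigma> (Suc M) b b' / w M * h b'\<bar> \<le> 2 * (real b + 1) * ((real b' + 1) * h b')"
        unfolding eventually_sequentially
      proof (intro exI[of _ M0] allI impI ballI)
        fix M b' assume M: "M \<ge> M0"
        show "\<bar>Wk \<sigma> (Suc M) b b' / w M * h b'\<bar> \<le> 2 * (real b + 1) * ((real b' + 1) * h b')"
          using ptb[OF M, of b b'] abs_of_nonneg[OF pt0[of M b b']] by linarith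
      qed
    next
      show "(\<lambda>b'. 2 * (real b + 1) * ((real b' + 1) * h b')) summable_on UNIV"
        by (rule summable_on_cmult_right) (rule has_sum_imp_summable[OF hH])
    qed
    have "infsum (\<lambda>b'. (real b + 1) * (real b' + 1) * h b') UNIV = (real b + 1) * H"
      using has_sum_cmult_right[OF hH, of "real b + 1"] by (simp add: infsumI mult.assoc)
    then show ?thesis using lim unfolding eq by simp
  qed
  define f where "f M a = \<alpha> a * cI I x 0 a * bk (sk \<sigma>) (cI I x) (\<lambda>b. Mid M b / w M) K a" for M a
  have Num_eq2: "Num \<sigma> \<alpha> \<beta> (K + Suc M + K) I x J y / w M = infsum (f M) UNIV" for M
  proof -
    define L where "L = K + Suc M + K"
    have KL: "K \<le> L" unfolding L_def by simp
    have "Num \<sigma> \<alpha> \<beta> L I x J y = infsum (\<lambda>a. (\<alpha> a * cFL L I x J y 0 a) * bk (sk \<sigma>) (cFL L I x J y) \<beta> L a) UNIV"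
      by (rule Num_eq[OF s a0 b0 I J KL has_sum_infsum[OF outer_summable[OF s a0 b0 sa sb cFL_nonneg cFL_le1]]])
    also have "\<dots> = infsum (\<lambda>a. \<alpha> a * cI I x 0 a * bk (sk \<sigma>) (cI I x) (Mid M) K a) UNIV"
      using decomp[OF I J L_def] unfolding Mid_def h_def by (simp del: bk.simps)
    finally have "Num \<sigma> \<alpha> \<beta> L I x J y / w M = infsum (\<lambda>a. \<alpha> a * cI I x 0 a * bk (sk \<sigma>) (cI I x) (Mid M) K a) UNIV * (1 / w M)"
      by simp
    also have "\<dots> = infsum (\<lambda>a. \<alpha> a * cI I x 0 a * bk (sk \<sigma>) (cI I x) (Mid M) K a * (1 / w M)) UNIV"
      by (rule infsum_cmult_left'[symmetric])
    also have "\<dots> = infsum (f M) UNIV"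
    proof (rule infsum_cong)
      fix a
      have "bk (sk \<sigma>) (cI I x) (\<lambda>b. Mid M b / w M) K a = bk (sk \<sigma>) (cI I x) (\<lambda>b. (1 / w M) * Mid M b) K a" by simp
      also have "\<dots> = (1 / w M) * bk (sk \<sigma>) (cI I x) (Mid M) K a" by (rule bk_cmult)
      finally show "\<alpha> a * cI I x 0 a * bk (sk \<sigma>) (cI I x) (Mid M) K a * (1 / w M) = f M a"
        unfolding f_def by simp
    qed
    finally show ?thesis unfolding L_def .
  qed
  have lim: "(\<lambda>M. infsum (f M) UNIV) \<longlonglongrightarrow> infsum (\<lambda>a. \<alpha> a * cI I x 0 a * bk (sk \<sigma>) (cI I x) (\<lambda>b. (real b + 1) * H) K a) UNIV"
  proof (rule tannery_infsum)
    fix a :: nat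
    show "(\<lambda>M. f M a) \<longlonglongrightarrow> \<alpha> a * cI I x 0 a * bk (sk \<sigma>) (cI I x) (\<lambda>b. (real b + 1) * H) K a"
      unfolding f_def by (intro tendsto_mult tendsto_const bk_tendsto inner)
  next
    show "\<forall>\<^sub>F M in sequentially. \<forall>a\<in>UNIV. \<bar>f M a\<bar> \<le> \<alpha> a * (2 * H * ((2 + \<sigma>) ^ K * (real a + 1)))"
      unfolding eventually_sequentially
    proof (intro exI[of _ M0] allI impI ballI)
      fix M a assume M: "M \<ge> M0"
      have bk0: "0 \<le> bk (sk \<sigma>) (cI I x) (\<lambda>b. Mid M b / w M) K a"
        by (rule bk_nonneg[OF sk0 cI_nonneg Mid0])
      have "bk (sk \<sigma>) (cI I x) (\<lambda>b. Mid M b / w M) K a \<le> bk (sk \<sigma>) (\<lambda>_ _. 1) (\<lambda>b. (2 * H) * (real b + 1)) K a"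
        by (rule bk_mono[OF sk0 cI_nonneg cI_le1 Mid0]) (use Mid_bd[OF M] in \<open>simp add: algebra_simps\<close>)
      also have "\<dots> = 2 * H * ((2 + \<sigma>) ^ K * (real a + 1))" by (simp only: bk_cmult harmonic)
      finally have bkb: "bk (sk \<sigma>) (cI I x) (\<lambda>b. Mid M b / w M) K a \<le> 2 * H * ((2 + \<sigma>) ^ K * (real a + 1))" .
      have "f M a \<le> (\<alpha> a * 1) * (2 * H * ((2 + \<sigma>) ^ K * (real a + 1)))"
        unfolding f_def
      proof (rule mult_mono[OF _ bkb _ bk0])
        show "\<alpha> a * cI I x 0 a \<le> \<alpha> a * 1" using a0[of a] cI_le1[of I x 0 a] by (rule mult_left_mono[rotated])
      qed (use a0[of a] in simp)
      moreover have "f M a \<ge> 0" unfolding f_def using a0[of a] cI_nonneg[of I x 0 a] bk0 by simp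
      ultimately show "\<bar>f M a\<bar> \<le> \<alpha> a * (2 * H * ((2 + \<sigma>) ^ K * (real a + 1)))" by simp
    qed
  next
    have "(\<lambda>a. (2 * H * (2 + \<sigma>) ^ K) * ((real a + 1) * \<alpha> a)) summable_on UNIV"
      by (rule summable_on_cmult_right) (rule has_sum_imp_summable[OF seq_facts(2)[OF a0 sa]])
    then show "(\<lambda>a. \<alpha> a * (2 * H * ((2 + \<sigma>) ^ K * (real a + 1)))) summable_on UNIV"
      by (simp add: algebra_simps)
  qed
  have "infsum (\<lambda>a. \<alpha> a * cI I x 0 a * bk (sk \<sigma>) (cI I x) (\<lambda>b. (real b + 1) * H) K a) UNIV
      = infsum (\<lambda>a. H * (\<alpha> a * cI I x 0 a * bk (sk \<sigma>) (cI I x) (\<lambda>b. real b + 1) K a)) UNIV"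
  proof (rule infsum_cong)
    fix a
    have "bk (sk \<sigma>) (cI I x) (\<lambda>b. (real b + 1) * H) K a = bk (sk \<sigma>) (cI I x) (\<lambda>b. H * (real b + 1)) K a"
      by (simp add: mult.commute)
    also have "\<dots> = H * bk (sk \<sigma>) (cI I x) (\<lambda>b. real b + 1) K a" by (rule bk_cmult)
    finally show "\<alpha> a * cI I x 0 a * bk (sk \<sigma>) (cI I x) (\<lambda>b. (real b + 1) * H) K a
        = H * (\<alpha> a * cI I x 0 a * bk (sk \<sigma>) (cI I x) (\<lambda>b. real b + 1) K a)" by simp
  qed
  also have "\<dots> = H * AQ \<sigma> K \<alpha> I x" unfolding AQ_def by (rule infsum_cmult_right')
  finally have "(\<lambda>M. infsum (f M) UNIV) \<longlonglongrightarrow> AQ \<sigma> K \<alpha> I x * AQ \<sigma> K \<beta> J y"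
    using lim unfolding H_def by (simp add: mult.commute)
  then show ?thesis using Num_eq2 unfolding w_def by simp
qed

theorem theorem1p1:
  fixes \<sigma> :: real and \<alpha> \<beta> :: "nat \<Rightarrow> real"
  assumes "\<sigma> > 0"
    and "\<forall>n. \<alpha> n \<ge> 0" and "\<forall>n. \<beta> n \<ge> 0"
    and "\<exists>n. \<alpha> n \<noteq> 0" and "\<exists>n. \<beta> n \<noteq> 0"
    and "summable (\<lambda>n. real n * \<alpha> n)" and "summable (\<lambda>n. real n * \<beta> n)"
  shows "\<forall>K I J (x :: nat \<Rightarrow> nat) (y :: nat \<Rightarrow> nat). I \<subseteq> {..K} \<longrightarrow> J \<subseteq> {..K} \<longrightarrow>
    ((\<lambda>L. motzkin_prob \<alpha> \<beta> \<sigma> L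
            {g. (\<forall>k\<in>I. gamma_proc L g k = x k) \<and> (\<forall>k\<in>J. gamma_rev_proc L g k = y k)})
     \<longlongrightarrow> mc_cyl_prob (init_law \<alpha>) (trans_P \<sigma>) K I x
          * mc_cyl_prob (init_law \<beta>) (trans_P \<sigma>) K J y) sequentially"
proof (intro allI impI)
  fix K :: nat and I J :: "nat set" and x y :: "nat \<Rightarrow> nat"
  assume I: "I \<subseteq> {..K}" and J: "J \<subseteq> {..K}"
  have s: "\<sigma> > 0" using assms(1) .
  have a0: "\<And>n. \<alpha> n \<ge> 0" using assms(2) by auto
  have b0: "\<And>n. \<beta> n \<ge> 0" using assms(3) by auto
  have na: "\<exists>n. \<alpha> n \<noteq> 0" and nb: "\<exists>n. \<beta> n \<noteq> 0" using assms(4,5) .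
  have sa: "summable (\<lambda>n. real n * \<alpha> n)" and sb: "summable (\<lambda>n. real n * \<beta> n)" using assms(6,7) .
  define Ca where "Ca = (\<Sum>m. (real m + 1) * \<alpha> m)"
  define Cb where "Cb = (\<Sum>m. (real m + 1) * \<beta> m)"
  have Ca: "Ca > 0" unfolding Ca_def by (rule Cw_pos[OF a0 sa na])
  have Cb: "Cb > 0" unfolding Cb_def by (rule Cw_pos[OF b0 sb nb])
  have p: "(2 + \<sigma>) ^ K > 0" using s by simp
  have A0: "AQ \<sigma> K \<alpha> {} x = (2 + \<sigma>) ^ K * Ca" unfolding Ca_def by (rule AQ_empty[OF a0 sa])
  have B0: "AQ \<sigma> K \<beta> {} y = (2 + \<sigma>) ^ K * Cb" unfolding Cb_def by (rule AQ_empty[OF b0 sb])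
  have E0: "{} \<subseteq> {..K}" by simp
  define f where "f L = motzkin_prob \<alpha> \<beta> \<sigma> L
            {g. (\<forall>k\<in>I. gamma_proc L g k = x k) \<and> (\<forall>k\<in>J. gamma_rev_proc L g k = y k)}" for L
  have prob: "f L = Num \<sigma> \<alpha> \<beta> L I x J y / Num \<sigma> \<alpha> \<beta> L {} x {} y" for L
    unfolding f_def motzkin_prob_def motzkin_const_def Num_def EE_def by simp
  have lim1: "(\<lambda>M. Num \<sigma> \<alpha> \<beta> (K + Suc M + K) I x J y / Wk \<sigma> (Suc M) 0 0) \<longlonglongrightarrow> AQ \<sigma> K \<alpha> I x * AQ \<sigma> K \<beta> J y"
    by (rule num_lim[OF s a0 b0 sa sb I J])
  have lim0: "(\<lambda>M. Num \<sigma> \<alpha> \<beta> (K + Suc M + K) {} x {} y / Wk \<sigma> (Suc M) 0 0) \<longlonglongrightarrow> AQ \<sigma> K \<alpha> {} x * AQ \<sigma> K \<beta> {} y"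
    by (rule num_lim[OF s a0 b0 sa sb E0 E0])
  have nz: "AQ \<sigma> K \<alpha> {} x * AQ \<sigma> K \<beta> {} y \<noteq> 0" unfolding A0 B0 using Ca Cb p s by simp
  have lim2: "(\<lambda>M. (Num \<sigma> \<alpha> \<beta> (K + Suc M + K) I x J y / Wk \<sigma> (Suc M) 0 0)
       / (Num \<sigma> \<alpha> \<beta> (K + Suc M + K) {} x {} y / Wk \<sigma> (Suc M) 0 0))
      \<longlonglongrightarrow> (AQ \<sigma> K \<alpha> I x * AQ \<sigma> K \<beta> J y) / (AQ \<sigma> K \<alpha> {} x * AQ \<sigma> K \<beta> {} y)"
    by (rule tendsto_divide[OF lim1 lim0 nz])
  have eqf: "(Num \<sigma> \<alpha> \<beta> (K + Suc M + K) I x J y / Wk \<sigma> (Suc M) 0 0)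
       / (Num \<sigma> \<alpha> \<beta> (K + Suc M + K) {} x {} y / Wk \<sigma> (Suc M) 0 0) = f (M + (2 * K + 1))" for M
  proof -
    have w: "Wk \<sigma> (Suc M) 0 0 \<noteq> 0" using Wk00_pos[OF s, of "Suc M"] by simp
    have e: "M + (2 * K + 1) = K + Suc M + K" by simp
    show ?thesis unfolding e prob using w by simp
  qed
  have target: "(AQ \<sigma> K \<alpha> I x * AQ \<sigma> K \<beta> J y) / (AQ \<sigma> K \<alpha> {} x * AQ \<sigma> K \<beta> {} y)
      = mc_cyl_prob (init_law \<alpha>) (trans_P \<sigma>) K I x * mc_cyl_prob (init_law \<beta>) (trans_P \<sigma>) K J y"
    unfolding mc_eq[OF s a0 sa na I] mc_eq[OF s b0 sb nb J] A0 B0 Ca_def[symmetric] Cb_def[symmetric]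
    by simp
  have "(\<lambda>M. f (M + (2 * K + 1))) \<longlonglongrightarrow> mc_cyl_prob (init_law \<alpha>) (trans_P \<sigma>) K I x * mc_cyl_prob (init_law \<beta>) (trans_P \<sigma>) K J y"
    using lim2 unfolding eqf target .
  then have "f \<longlonglongrightarrow> mc_cyl_prob (init_law \<alpha>) (trans_P \<sigma>) K I x * mc_cyl_prob (init_law \<beta>) (trans_P \<sigma>) K J y"
    by (rule LIMSEQ_offset)
  then show "((\<lambda>L. motzkin_prob \<alpha> \<beta> \<sigma> L
            {g. (\<forall>k\<in>I. gamma_proc L g k = x k) \<and> (\<forall>k\<in>J. gamma_rev_proc L g k = y k)})
     \<longlongrightarrow> mc_cyl_prob (init_law \<alpha>) (trans_P \<sigma>) K I x
          * mc_cyl_prob (init_law \<beta>) (trans_P \<sigma>) K J y) sequentially"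
    unfolding f_def .
qed

end
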